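(* Let the setting, Assumption A and Assumption B below hold, with agents and data sampled without replacement, and let $w_i$ be generated by the ISFedAvg algorithm below. Define the incremental noise $$q_i=\frac1L\sum_{\ell\in\mathcal{L}_i}\frac{1}{Kp_\ell E_\ell B_\ell}\sum_{e=1}^{E_\ell}\sum_{b\in\mathcal{B}_{\ell,e}}\frac{1}{N_\ell p_b^{(\ell)}}\Big(\nabla_w Q_\ell(w_{\ell,e-1};x_{\ell,b})-\nabla_w Q_\ell(w_{i-1};x_{\ell,b})\Big).$$ Then $$\mathbb{E}\|q_i\|^2\le O(\mu)\,\mathbb{E}\|\widetilde w_{i-1}\|^2+O(\mu)\,\xi^2+O(\mu^2)\frac1K\sum_{k=1}^K\sigma_{q,k}^2,$$ where $\widetilde w_{i-1}=w^o-w_{i-1}$, $\sigma_{q,k}^2=\frac{3}{B_kN_k^2}\sum_{n=1}^{N_k}\frac{1}{p_n^{(k)}}\|\nabla_wQ_k(w_k^o;x_{k,n})\|^2$, and the constants implicit in the $O(\cdot)$ terms depend on the epoch sizes, local convergence rates, numbers of data samples, number of agents, Lipschitz constant, and the data and agent normalized inclusion probabilities. In particular $\mathbb{E}\|q_i\|^2=O(\mu)$.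
   Context: There are $K$ agents; agent $k$ holds data points $x_{k,1},\dots,x_{k,N_k}$, a loss $Q_k(w;x)$ differentiable in $w\in\mathbb{R}^M$, and the empirical risk $P_k(w)=\frac1{N_k}\sum_{n=1}^{N_k}Q_k(w;x_{k,n})$. Let $w^o=\arg\min_w\frac1K\sum_kP_k(w)$ and $w_k^o=\arg\min_wP_k(w)$. Assumption A: each $P_k$ is $\nu$-strongly convex ($\nu>0$), each $Q_k(\cdot;x_{k,n})$ is convex with $\delta$-Lipschitz gradient. Assumption B: $\|w_k^o-w^o\|\le\xi$ for all $k$. ISFedAvg with step-size $\mu>0$: at iteration $i$, select $L$ agents $\mathcal{L}_i$ from $\{1,\dots,K\}$ without replacement with $\mathbb{P}(k\in\mathcal{L}_i)=Lp_k$ ($p_k>0$, $\sum_kp_k=1$); each $k\in\mathcal{L}_i$ sets $w_{k,0}=w_{i-1}$ and for $e=1,\dots,E_k$ draws a mini-batch $\mathcal{B}_{k,e}$ of $B_k$ indices from $\{1,\dots,N_k\}$ without replacement with $\mathbb{P}(n\in\mathcal{B}_{k,e})=B_kp_n^{(k)}$ ($p_n^{(k)}>0$, $\sum_np_n^{(k)}=1$), independently of the past, and updates $w_{k,e}=w_{k,e-1}-\frac{\mu}{Kp_kE_kB_k}\sum_{b\in\mathcal{B}_{k,e}}\frac{1}{N_kp_b^{(k)}}\nabla_wQ_k(w_{k,e-1};x_{k,b})$; then $w_i=\frac1L\sum_{k\in\mathcal{L}_i}w_{k,E_k}$. The notation $O(\mu^a)$ denotes a term bounded by $C\mu^a$ for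 a constant $C$ independent of $\mu$ and $i$, for sufficiently small $\mu$. *)

theory Defs
  imports "HOL-Probability.Probability"
begin

definition strongly_convex_fun :: "real \<Rightarrow> ('a::real_inner \<Rightarrow> real) \<Rightarrow> bool" where
  "strongly_convex_fun \<nu> f \<longleftrightarrow>
     (\<forall>x y t. 0 \<le> t \<and> t \<le> 1 \<longrightarrow>
        f (t *\<^sub>R x + (1 - t) *\<^sub>R y)
          \<le> t * f x + (1 - t) * f y - \<nu> / 2 * t * (1 - t) * (norm (x - y))\<^sup>2)"

definition emp_risk :: "(nat \<Rightarrow> nat) \<Rightarrow> (nat \<Rightarrow> 'a \<Rightarrow> 'x \<Rightarrow> real) \<Rightarrow> (nat \<Rightarrow> nat \<Rightarrow> 'x)
    \<Rightarrow> nat \<Rightarrow> 'a \<Rightarrow> real" where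
  "emp_risk N Q x k w = (1 / real (N k)) * (\<Sum>n<N k. Q k w (x k n))"

definition agent_design :: "nat \<Rightarrow> nat \<Rightarrow> (nat \<Rightarrow> real) \<Rightarrow> nat set pmf \<Rightarrow> bool" where
  "agent_design K L p asel \<longleftrightarrow>
     set_pmf asel \<subseteq> {S. S \<subseteq> {..<K} \<and> card S = L} \<and>
     (\<forall>k<K. measure_pmf.prob asel {S. k \<in> S} = real L * p k)"

definition batch_design :: "nat \<Rightarrow> nat \<Rightarrow> (nat \<Rightarrow> real) \<Rightarrow> nat set pmf \<Rightarrow> bool" where
  "batch_design N B pn bsel \<longleftrightarrow>
     set_pmf bsel \<subseteq> {S. S \<subseteq> {..<N} \<and> card S = B} \<and>
     (\<forall>n<N. measure_pmf.prob bsel {S. n \<in> S} = real B * pn n)"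

text \<open>Local iterate w_{k,e} of agent k started from w, given the mini-batches
  bs (k,e) = B_{k,e}.  G k n w is the gradient of Q_k(.; x_{k,n}) at w.\<close>
fun local_iter :: "real \<Rightarrow> nat \<Rightarrow> (nat \<Rightarrow> real) \<Rightarrow> (nat \<Rightarrow> nat) \<Rightarrow> (nat \<Rightarrow> nat) \<Rightarrow> (nat \<Rightarrow> nat)
    \<Rightarrow> (nat \<Rightarrow> nat \<Rightarrow> real) \<Rightarrow> (nat \<Rightarrow> nat \<Rightarrow> 'a \<Rightarrow> 'a) \<Rightarrow> nat \<Rightarrow> 'a
    \<Rightarrow> (nat \<times> nat \<Rightarrow> nat set) \<Rightarrow> nat \<Rightarrow> 'a::real_vector" where
  "local_iter \<mu> K p N E B pn G k w bs 0 = w"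
| "local_iter \<mu> K p N E B pn G k w bs (Suc e) =
     local_iter \<mu> K p N E B pn G k w bs e
     - (\<mu> / (real K * p k * real (E k) * real (B k))) *\<^sub>R
         (\<Sum>b\<in>bs (k, Suc e). (1 / (real (N k) * pn k b)) *\<^sub>R
             G k b (local_iter \<mu> K p N E B pn G k w bs e))"

text \<open>Randomness of one round: the agent set L_i and all mini-batches B_{k,e},
  drawn independently (mini-batches of non-selected agents are irrelevant).\<close>
definition round_pmf :: "nat \<Rightarrow> (nat \<Rightarrow> nat) \<Rightarrow> nat set pmf \<Rightarrow> (nat \<Rightarrow> nat set pmf)
    \<Rightarrow> (nat set \<times> (nat \<times> nat \<Rightarrow> nat set)) pmf" where
  "round_pmf K E asel bsel =
     pair_pmf asel (Pi_pmf (SIGMA k:{..<K}. {1..E k}) {} (\<lambda>(k, e). bsel k))"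

definition fedavg_next :: "real \<Rightarrow> nat \<Rightarrow> nat \<Rightarrow> (nat \<Rightarrow> real) \<Rightarrow> (nat \<Rightarrow> nat) \<Rightarrow> (nat \<Rightarrow> nat)
    \<Rightarrow> (nat \<Rightarrow> nat) \<Rightarrow> (nat \<Rightarrow> nat \<Rightarrow> real) \<Rightarrow> (nat \<Rightarrow> nat \<Rightarrow> 'a \<Rightarrow> 'a) \<Rightarrow> 'a
    \<Rightarrow> nat set \<times> (nat \<times> nat \<Rightarrow> nat set) \<Rightarrow> 'a::real_vector" where
  "fedavg_next \<mu> K L p N E B pn G w \<omega> =
     (1 / real L) *\<^sub>R (\<Sum>k\<in>fst \<omega>. local_iter \<mu> K p N E B pn G k w (snd \<omega>) (E k))"

definition incr_noise :: "real \<Rightarrow> nat \<Rightarrow> nat \<Rightarrow> (nat \<Rightarrow> real) \<Rightarrow> (nat \<Rightarrow> nat) \<Rightarrow> (nat \<Rightarrow> nat)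
    \<Rightarrow> (nat \<Rightarrow> nat) \<Rightarrow> (nat \<Rightarrow> nat \<Rightarrow> real) \<Rightarrow> (nat \<Rightarrow> nat \<Rightarrow> 'a \<Rightarrow> 'a) \<Rightarrow> 'a
    \<Rightarrow> nat set \<times> (nat \<times> nat \<Rightarrow> nat set) \<Rightarrow> 'a::real_vector" where
  "incr_noise \<mu> K L p N E B pn G w \<omega> =
     (1 / real L) *\<^sub>R (\<Sum>l\<in>fst \<omega>. (1 / (real K * p l * real (E l) * real (B l))) *\<^sub>R
        (\<Sum>e\<in>{1..E l}. \<Sum>b\<in>snd \<omega> (l, e). (1 / (real (N l) * pn l b)) *\<^sub>R
            (G l b (local_iter \<mu> K p N E B pn G l w (snd \<omega>) (e - 1)) - G l b w)))"

text \<open>Distribution of the iterates: iterates ... w0 j is the law of the j-th iterate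
  after the deterministic initial point w0 (rounds are independent).\<close>
fun iterates :: "real \<Rightarrow> nat \<Rightarrow> nat \<Rightarrow> (nat \<Rightarrow> real) \<Rightarrow> (nat \<Rightarrow> nat) \<Rightarrow> (nat \<Rightarrow> nat)
    \<Rightarrow> (nat \<Rightarrow> nat) \<Rightarrow> (nat \<Rightarrow> nat \<Rightarrow> real) \<Rightarrow> (nat \<Rightarrow> nat \<Rightarrow> 'a \<Rightarrow> 'a)
    \<Rightarrow> nat set pmf \<Rightarrow> (nat \<Rightarrow> nat set pmf) \<Rightarrow> 'a \<Rightarrow> nat \<Rightarrow> 'a::real_vector pmf" where
  "iterates \<mu> K L p N E B pn G asel bsel w0 0 = return_pmf w0"
| "iterates \<mu> K L p N E B pn G asel bsel w0 (Suc j) =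
     bind_pmf (iterates \<mu> K L p N E B pn G asel bsel w0 j)
       (\<lambda>w. map_pmf (fedavg_next \<mu> K L p N E B pn G w) (round_pmf K E asel bsel))"

text \<open>Law of the incremental noise of the round following iterate j.\<close>
definition noise_pmf :: "real \<Rightarrow> nat \<Rightarrow> nat \<Rightarrow> (nat \<Rightarrow> real) \<Rightarrow> (nat \<Rightarrow> nat) \<Rightarrow> (nat \<Rightarrow> nat)
    \<Rightarrow> (nat \<Rightarrow> nat) \<Rightarrow> (nat \<Rightarrow> nat \<Rightarrow> real) \<Rightarrow> (nat \<Rightarrow> nat \<Rightarrow> 'a \<Rightarrow> 'a)
    \<Rightarrow> nat set pmf \<Rightarrow> (nat \<Rightarrow> nat set pmf) \<Rightarrow> 'a \<Rightarrow> nat \<Rightarrow> 'a::real_vector pmf" where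
  "noise_pmf \<mu> K L p N E B pn G asel bsel w0 j =
     bind_pmf (iterates \<mu> K L p N E B pn G asel bsel w0 j)
       (\<lambda>w. map_pmf (incr_noise \<mu> K L p N E B pn G w) (round_pmf K E asel bsel))"

definition sigma_q2 :: "(nat \<Rightarrow> nat) \<Rightarrow> (nat \<Rightarrow> nat) \<Rightarrow> (nat \<Rightarrow> nat \<Rightarrow> real)
    \<Rightarrow> (nat \<Rightarrow> nat \<Rightarrow> 'a \<Rightarrow> 'a::real_normed_vector) \<Rightarrow> (nat \<Rightarrow> 'a) \<Rightarrow> nat \<Rightarrow> real" where
  "sigma_q2 N B pn G wko k =
     3 / (real (B k) * (real (N k))\<^sup>2) * (\<Sum>n<N k. (1 / pn k n) * (norm (G k n (wko k)))\<^sup>2)"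


definition instance_assms :: "nat \<Rightarrow> nat \<Rightarrow> (nat \<Rightarrow> real) \<Rightarrow> (nat \<Rightarrow> nat) \<Rightarrow> (nat \<Rightarrow> nat)
    \<Rightarrow> (nat \<Rightarrow> nat \<Rightarrow> real) \<Rightarrow> real \<Rightarrow> real
    \<Rightarrow> (nat \<Rightarrow> 'a::euclidean_space \<Rightarrow> 'x \<Rightarrow> real) \<Rightarrow> (nat \<Rightarrow> 'a \<Rightarrow> 'x \<Rightarrow> 'a) \<Rightarrow> (nat \<Rightarrow> nat \<Rightarrow> 'x)
    \<Rightarrow> real \<Rightarrow> 'a \<Rightarrow> (nat \<Rightarrow> 'a) \<Rightarrow> nat set pmf \<Rightarrow> (nat \<Rightarrow> nat set pmf) \<Rightarrow> bool" where
  "instance_assms K L p N B pn \<delta> \<nu> Q grad x \<xi> wo wko asel bsel \<longleftrightarrow>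
     \<comment> \<open>grad k w (x k n) is the gradient of Q_k(.; x_{k,n}) at w\<close>
     (\<forall>k<K. \<forall>n<N k. \<forall>w. ((\<lambda>v. Q k v (x k n)) has_derivative (\<lambda>h. grad k w (x k n) \<bullet> h)) (at w)) \<and>
     \<comment> \<open>Assumption A\<close>
     (\<forall>k<K. strongly_convex_fun \<nu> (emp_risk N Q x k)) \<and>
     (\<forall>k<K. \<forall>n<N k. convex_on UNIV (\<lambda>v. Q k v (x k n))) \<and>
     (\<forall>k<K. \<forall>n<N k. \<delta>-lipschitz_on UNIV (\<lambda>v. grad k v (x k n))) \<and>
     \<comment> \<open>w^o minimizes 1/K sum_k P_k, w_k^o minimizes P_k\<close>
     (\<forall>w. (1 / real K) * (\<Sum>k<K. emp_risk N Q x k wo) \<le> (1 / real K) * (\<Sum>k<K. emp_risk N Q x k w)) \<and>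
     (\<forall>k<K. \<forall>w. emp_risk N Q x k (wko k) \<le> emp_risk N Q x k w) \<and>
     \<comment> \<open>Assumption B\<close>
     (\<forall>k<K. norm (wko k - wo) \<le> \<xi>) \<and>
     \<comment> \<open>sampling without replacement with the prescribed inclusion probabilities\<close>
     agent_design K L p asel \<and>
     (\<forall>k<K. batch_design (N k) (B k) (pn k) (bsel k))"

end

theory Submission
  imports Defs
begin

lemma exp_bind_fin:
  fixes h :: "'b \<Rightarrow> real"
  assumes "finite (set_pmf p)" "\<And>x. x \<in> set_pmf p \<Longrightarrow> finite (set_pmf (f x))"
  shows "measure_pmf.expectation (bind_pmf p f) h
       = measure_pmf.expectation p (\<lambda>x. measure_pmf.expectation (f x) h)"
proof -
  have "measure_pmf.expectation (bind_pmf p f) h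
      = (\<Sum>a\<in>set_pmf p. pmf p a *\<^sub>R measure_pmf.expectation (f a) h)"
    by (rule pmf_expectation_bind) (use assms in auto)
  also have "\<dots> = measure_pmf.expectation p (\<lambda>x. measure_pmf.expectation (f x) h)"
    by (subst integral_measure_pmf[of "set_pmf p"]) (use assms in auto)
  finally show ?thesis .
qed

lemma exp_mono_fin:
  fixes f g :: "'b \<Rightarrow> real"
  assumes "finite (set_pmf M)" "\<And>x. x \<in> set_pmf M \<Longrightarrow> f x \<le> g x"
  shows "measure_pmf.expectation M f \<le> measure_pmf.expectation M g"
proof -
  have "measure_pmf.expectation M f = (\<Sum>a\<in>set_pmf M. f a * pmf M a)"
    by (rule integral_measure_pmf_real) (use assms in auto)
  also have "\<dots> \<le> (\<Sum>a\<in>set_pmf M. g a * pmf M a)"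
    by (intro sum_mono mult_right_mono) (use assms in auto)
  also have "\<dots> = measure_pmf.expectation M g"
    by (rule integral_measure_pmf_real[symmetric]) (use assms in auto)
  finally show ?thesis .
qed

lemma exp_sum_set:
  fixes f :: "'b \<Rightarrow> real"
  assumes "finite A" "set_pmf M \<subseteq> {S. S \<subseteq> A}"
  shows "measure_pmf.expectation M (\<lambda>S. \<Sum>i\<in>S. f i) = (\<Sum>i\<in>A. measure_pmf.prob M {S. i \<in> S} * f i)"
proof -
  have "measure_pmf.expectation M (\<lambda>S. \<Sum>i\<in>S. f i)
      = measure_pmf.expectation M (\<lambda>S. \<Sum>i\<in>A. indicator {S. i \<in> S} S * f i)"
  proof (rule integral_cong_AE)
    show "AE S in measure_pmf M. (\<Sum>i\<in>S. f i) = (\<Sum>i\<in>A. indicator {S. i \<in> S} S * f i)"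
    proof (subst AE_measure_pmf_iff, intro ballI)
      fix S assume "S \<in> set_pmf M"
      hence "S \<subseteq> A" using assms by auto
      thus "(\<Sum>i\<in>S. f i) = (\<Sum>i\<in>A. indicator {S. i \<in> S} S * f i)"
        using assms(1) by (simp add: indicator_def sum.If_cases Int_absorb1 Int_commute)
    qed
  qed auto
  also have "\<dots> = (\<Sum>i\<in>A. measure_pmf.expectation M (\<lambda>S. indicator {S. i \<in> S} S * f i))"
  proof (rule Bochner_Integration.integral_sum[where I=A and M="measure_pmf M" and f="\<lambda>i S. indicator {S. i \<in> S} S * f i"])
    have "finite (set_pmf M)" 
      using assms finite_subset[of "set_pmf M" "Pow A"] by auto
    thus "\<And>i. i \<in> A \<Longrightarrow> integrable (measure_pmf M) (\<lambda>S. indicator {S. i \<in> S} S * f i)"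
      by (simp add: integrable_measure_pmf_finite)
  qed
  also have "\<dots> = (\<Sum>i\<in>A. measure_pmf.prob M {S. i \<in> S} * f i)"
    by simp
  finally show ?thesis .
qed

lemma exp_cong_fin:
  fixes f g :: "'b \<Rightarrow> real"
  assumes "finite (set_pmf M)" "\<And>x. x \<in> set_pmf M \<Longrightarrow> f x = g x"
  shows "measure_pmf.expectation M f = measure_pmf.expectation M g"
  using exp_mono_fin[of M f g] exp_mono_fin[of M g f] assms by force

lemma exp_pair_fin:
  fixes f :: "'b \<times> 'c \<Rightarrow> real"
  assumes "finite (set_pmf A)" "finite (set_pmf B)"
  shows "measure_pmf.expectation (pair_pmf A B) f
       = measure_pmf.expectation A (\<lambda>a. measure_pmf.expectation B (\<lambda>b. f (a, b)))"
  unfolding pair_pmf_def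
  by (subst exp_bind_fin) (use assms in \<open>auto simp: exp_bind_fin\<close>)

lemma exp_affine:
  fixes f :: "'b \<Rightarrow> real"
  assumes "finite (set_pmf M)"
  shows "measure_pmf.expectation M (\<lambda>w. a * f w + b) = a * measure_pmf.expectation M f + b"
proof -
  have i1: "integrable (measure_pmf M) (\<lambda>w. a * f w)" and i2: "integrable (measure_pmf M) (\<lambda>w. b)"
    using assms by (simp_all add: integrable_measure_pmf_finite)
  show ?thesis
    by (subst Bochner_Integration.integral_add[OF i1 i2]) simp
qed

definition cc :: "nat \<Rightarrow> (nat \<Rightarrow> real) \<Rightarrow> (nat \<Rightarrow> nat) \<Rightarrow> (nat \<Rightarrow> nat) \<Rightarrow> nat \<Rightarrow> real" where
  "cc K p E B k = 1 / (real K * p k * real (E k) * real (B k))"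
definition aa :: "(nat \<Rightarrow> nat) \<Rightarrow> (nat \<Rightarrow> nat \<Rightarrow> real) \<Rightarrow> nat \<Rightarrow> nat \<Rightarrow> real" where
  "aa N pn k b = 1 / (real (N k) * pn k b)"

lemma local_iter_diff:
  "local_iter \<mu> K p N E B pn G k w bs e - w
   = - (\<mu> * cc K p E B k) *\<^sub>R (\<Sum>e'\<in>{1..e}. \<Sum>b\<in>bs (k, e'). aa N pn k b *\<^sub>R
          G k b (local_iter \<mu> K p N E B pn G k w bs (e' - 1)))"
proof (induction e)
  case 0
  then show ?case by simp
next
  case (Suc e)
  have "local_iter \<mu> K p N E B pn G k w bs (Suc e) - w
     = (local_iter \<mu> K p N E B pn G k w bs e - w) - (\<mu> * cc K p E B k) *\<^sub>R
         (\<Sum>b\<in>bs (k, Suc e). aa N pn k b *\<^sub>R G k b (local_iter \<mu> K p N E B pn G k w bs e))"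
    by (simp add: cc_def aa_def)
  then show ?case
    by (simp add: Suc.IH sum.cl_ivl_Suc algebra_simps)
qed

definition sdir :: "nat \<Rightarrow> nat \<Rightarrow> (nat \<Rightarrow> real) \<Rightarrow> (nat \<Rightarrow> nat) \<Rightarrow> (nat \<Rightarrow> nat)
    \<Rightarrow> (nat \<Rightarrow> nat) \<Rightarrow> (nat \<Rightarrow> nat \<Rightarrow> real) \<Rightarrow> (nat \<Rightarrow> nat \<Rightarrow> 'a \<Rightarrow> 'a) \<Rightarrow> 'a
    \<Rightarrow> nat set \<times> (nat \<times> nat \<Rightarrow> nat set) \<Rightarrow> 'a::real_vector" where
  "sdir K L p N E B pn G w \<omega> =
     (1 / real L) *\<^sub>R (\<Sum>l\<in>fst \<omega>. cc K p E B l *\<^sub>R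
        (\<Sum>e\<in>{1..E l}. \<Sum>b\<in>snd \<omega> (l, e). aa N pn l b *\<^sub>R G l b w))"

lemma next_minus:
  assumes "finite (fst \<omega>)" "card (fst \<omega>) = L" "L > 0"
  shows "fedavg_next \<mu> K L p N E B pn G w \<omega> - w
    = (1 / real L) *\<^sub>R (\<Sum>l\<in>fst \<omega>. local_iter \<mu> K p N E B pn G l w (snd \<omega>) (E l) - w)"
proof -
  have w: "w = (1 / real L) *\<^sub>R (\<Sum>l\<in>fst \<omega>. w)"
    using assms by (simp add: sum_constant_scaleR)
  show ?thesis
    unfolding fedavg_next_def
    by (subst (2) w) (simp add: sum_subtractf scaleR_diff_right)
qed

lemma next_decomp:
  assumes "finite (fst \<omega>)" "card (fst \<omega>) = L" "L > 0"
  shows "fedavg_next \<mu> K L p N E B pn G w \<omega> - w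
    = - \<mu> *\<^sub>R (sdir K L p N E B pn G w \<omega> + incr_noise \<mu> K L p N E B pn G w \<omega>)"
proof -
  define it where "it l e = local_iter \<mu> K p N E B pn G l w (snd \<omega>) e" for l e
  have w: "w = (1 / real L) *\<^sub>R (\<Sum>l\<in>fst \<omega>. w)"
    using assms by (simp add: sum_constant_scaleR)
  have "fedavg_next \<mu> K L p N E B pn G w \<omega> - w
      = (1 / real L) *\<^sub>R (\<Sum>l\<in>fst \<omega>. it l (E l) - w)"
    unfolding fedavg_next_def it_def
    by (subst (2) w) (simp add: sum_subtractf scaleR_diff_right)
  also have "\<dots> = (1 / real L) *\<^sub>R (\<Sum>l\<in>fst \<omega>. - (\<mu> * cc K p E B l) *\<^sub>R
        (\<Sum>e\<in>{1..E l}. \<Sum>b\<in>snd \<omega> (l, e). aa N pn l b *\<^sub>R G l b (it l (e - 1))))"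
    unfolding it_def by (simp only: local_iter_diff)
  also have "\<dots> = (1 / real L) *\<^sub>R (\<Sum>l\<in>fst \<omega>. - (\<mu> * cc K p E B l) *\<^sub>R
        ((\<Sum>e\<in>{1..E l}. \<Sum>b\<in>snd \<omega> (l, e). aa N pn l b *\<^sub>R G l b w)
        + (\<Sum>e\<in>{1..E l}. \<Sum>b\<in>snd \<omega> (l, e). aa N pn l b *\<^sub>R (G l b (it l (e - 1)) - G l b w))))"
    by (simp add: sum.distrib[symmetric] scaleR_diff_right)
  also have "\<dots> = - \<mu> *\<^sub>R (sdir K L p N E B pn G w \<omega> + incr_noise \<mu> K L p N E B pn G w \<omega>)"
    unfolding sdir_def incr_noise_def it_def cc_def aa_def
    by (simp add: scaleR_add_right sum.distrib scaleR_sum_right algebra_simps)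
  finally show ?thesis .
qed

definition alpha :: "nat \<Rightarrow> (nat \<Rightarrow> real) \<Rightarrow> (nat \<Rightarrow> nat) \<Rightarrow> (nat \<Rightarrow> nat) \<Rightarrow> (nat \<Rightarrow> nat) \<Rightarrow> (nat \<Rightarrow> nat \<Rightarrow> real) \<Rightarrow> real" where
  "alpha K p N E B pn = (\<Sum>k<K. \<Sum>b<N k. cc K p E B k * aa N pn k b)"
definition nI :: "nat \<Rightarrow> (nat \<Rightarrow> nat) \<Rightarrow> real" where
  "nI K N = (\<Sum>k<K. real (N k))"
definition Es :: "nat \<Rightarrow> (nat \<Rightarrow> nat) \<Rightarrow> nat" where
  "Es K E = (\<Sum>k<K. E k)"
definition mu01 :: "nat \<Rightarrow> (nat \<Rightarrow> real) \<Rightarrow> (nat \<Rightarrow> nat) \<Rightarrow> (nat \<Rightarrow> nat) \<Rightarrow> (nat \<Rightarrow> nat) \<Rightarrow> (nat \<Rightarrow> nat \<Rightarrow> real) \<Rightarrow> real \<Rightarrow> real" where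
  "mu01 K p N E B pn \<delta> = 1 / (1 + \<bar>alpha K p N E B pn\<bar> * nI K N * \<bar>\<delta>\<bar>)"
definition beta :: "nat \<Rightarrow> (nat \<Rightarrow> real) \<Rightarrow> (nat \<Rightarrow> nat) \<Rightarrow> (nat \<Rightarrow> nat) \<Rightarrow> (nat \<Rightarrow> nat) \<Rightarrow> (nat \<Rightarrow> nat \<Rightarrow> real) \<Rightarrow> real \<Rightarrow> real" where
  "beta K p N E B pn \<delta> = (\<Sum>l<K. real (E l) * real (N l)) * (alpha K p N E B pn)\<^sup>2 * \<bar>\<delta>\<bar> * 2 ^ Es K E"

definition C1g :: "nat \<Rightarrow> (nat \<Rightarrow> real) \<Rightarrow> (nat \<Rightarrow> nat) \<Rightarrow> (nat \<Rightarrow> nat) \<Rightarrow> (nat \<Rightarrow> nat) \<Rightarrow> (nat \<Rightarrow> nat \<Rightarrow> real) \<Rightarrow> real \<Rightarrow> real" where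
  "C1g K p N E B pn \<delta> = mu01 K p N E B pn \<delta> * (beta K p N E B pn \<delta>)\<^sup>2 * (4 * (nI K N)\<^sup>2 * \<delta>\<^sup>2)"

definition Wc :: "nat \<Rightarrow> (nat \<Rightarrow> nat) \<Rightarrow> (nat \<Rightarrow> nat) \<Rightarrow> real" where
  "Wc K' N' B' = (\<Sum>k<K'. real (B' k) * (real (N' k))\<^sup>2 / 3)"

definition C3g :: "nat \<Rightarrow> (nat \<Rightarrow> real) \<Rightarrow> (nat \<Rightarrow> nat) \<Rightarrow> (nat \<Rightarrow> nat) \<Rightarrow> (nat \<Rightarrow> nat) \<Rightarrow> (nat \<Rightarrow> nat \<Rightarrow> real) \<Rightarrow> real \<Rightarrow> real" where
  "C3g K p N E B pn \<delta> = (beta K p N E B pn \<delta>)\<^sup>2 * (2 * nI K N * real K * Wc K N B)"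

lemma nI_nonneg_g: "nI K N \<ge> 0" unfolding nI_def by (auto intro!: sum_nonneg)

lemma mu01_pos: "mu01 K p N E B pn \<delta> > 0"
  unfolding mu01_def using nI_nonneg_g[of K N] by (simp add: add_pos_nonneg)

lemma Wc_nonneg_g: "Wc K N B \<ge> 0" unfolding Wc_def by (auto intro!: sum_nonneg)

lemma C1g_nonneg: "C1g K p N E B pn \<delta> \<ge> 0"
  unfolding C1g_def using mu01_pos[of K p N E B pn \<delta>] by simp

lemma C3g_nonneg: "C3g K p N E B pn \<delta> \<ge> 0"
  unfolding C3g_def using nI_nonneg_g[of K N] Wc_nonneg_g[of K N B] by simp

locale inst =
  fixes K L :: nat and N E B :: "nat \<Rightarrow> nat" and p :: "nat \<Rightarrow> real"
    and pn :: "nat \<Rightarrow> nat \<Rightarrow> real" and \<delta> \<nu> :: real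
    and Q :: "nat \<Rightarrow> 'a::euclidean_space \<Rightarrow> 'x \<Rightarrow> real" and grad :: "nat \<Rightarrow> 'a \<Rightarrow> 'x \<Rightarrow> 'a"
    and x :: "nat \<Rightarrow> nat \<Rightarrow> 'x" and \<xi> :: real and wo :: 'a and wko :: "nat \<Rightarrow> 'a"
    and asel :: "nat set pmf" and bsel :: "nat \<Rightarrow> nat set pmf"
  assumes K1: "K \<ge> 1" and L1: "1 \<le> L" and LK: "L \<le> K"
    and ppos: "\<forall>k<K. p k > 0" and psum: "(\<Sum>k<K. p k) = 1"
    and EB: "\<forall>k<K. E k \<ge> 1 \<and> B k \<ge> 1 \<and> B k \<le> N k"
    and pnpos: "\<forall>k<K. (\<forall>n<N k. pn k n > 0) \<and> (\<Sum>n<N k. pn k n) = 1"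
    and nupos: "\<nu> > 0"
    and IA: "instance_assms K L p N B pn \<delta> \<nu> Q grad x \<xi> wo wko asel bsel"
begin

abbreviation "G \<equiv> (\<lambda>k n w. grad k w (x k n))"
abbreviation "\<alpha> \<equiv> alpha K p N E B pn"
abbreviation "rnd \<equiv> round_pmf K E asel bsel"

definition Gam :: "'a \<Rightarrow> real" where
  "Gam w = (\<Sum>k<K. \<Sum>b<N k. norm (grad k w (x k b)))"

lemma Gam_nonneg: "Gam w \<ge> 0"
  unfolding Gam_def by (intro sum_nonneg) auto

lemma Nk: "k < K \<Longrightarrow> N k \<ge> 1"
  using EB by force

lemma delta_nonneg: "\<delta> \<ge> 0"
proof -
  have "0 < K" using K1 by simp
  moreover have "0 < N 0" using Nk[of 0] K1 by simp
  ultimately show ?thesis using IA unfolding instance_assms_def lipschitz_on_def by blast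
qed

lemma lip: "k < K \<Longrightarrow> n < N k \<Longrightarrow> norm (grad k v (x k n) - grad k u (x k n)) \<le> \<delta> * norm (v - u)"
  using IA unfolding instance_assms_def lipschitz_on_def dist_norm by blast

lemma xi_nonneg: "\<xi> \<ge> 0"
proof -
  have "norm (wko 0 - wo) \<le> \<xi>" using IA K1 unfolding instance_assms_def by auto
  thus ?thesis using norm_ge_zero order_trans by blast
qed

lemma cc_pos: "k < K \<Longrightarrow> cc K p E B k > 0"
  unfolding cc_def using ppos EB K1 by (auto intro!: mult_pos_pos)

lemma aa_pos: "k < K \<Longrightarrow> b < N k \<Longrightarrow> aa N pn k b > 0"
  unfolding aa_def using pnpos Nk[of k] by (auto intro!: mult_pos_pos)

lemma alpha_nonneg: "\<alpha> \<ge> 0"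
  unfolding alpha_def using cc_pos aa_pos by (intro sum_nonneg) (auto intro!: mult_nonneg_nonneg less_imp_le)

lemma ca_nonneg: "k < K \<Longrightarrow> b < N k \<Longrightarrow> 0 \<le> cc K p E B k * aa N pn k b"
  using cc_pos aa_pos by (simp add: less_imp_le)

lemma ca_le_alpha: "k < K \<Longrightarrow> b < N k \<Longrightarrow> cc K p E B k * aa N pn k b \<le> \<alpha>"
proof -
  assume k: "k < K" and b: "b < N k"
  have "cc K p E B k * aa N pn k b \<le> (\<Sum>b<N k. cc K p E B k * aa N pn k b)"
    using b k by (intro member_le_sum) (auto simp: ca_nonneg)
  also have "\<dots> \<le> \<alpha>"
    unfolding alpha_def using k
    by (intro member_le_sum[where f="\<lambda>k. \<Sum>b<N k. cc K p E B k * aa N pn k b"])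
       (auto intro!: sum_nonneg simp: ca_nonneg)
  finally show ?thesis .
qed

lemma Nk_le_nI: "k < K \<Longrightarrow> real (N k) \<le> nI K N"
  unfolding nI_def by (intro member_le_sum) auto

lemma Ek_le_Es: "k < K \<Longrightarrow> E k \<le> Es K E"
  unfolding Es_def by (intro member_le_sum) auto

lemma Gamk_le: "k < K \<Longrightarrow> (\<Sum>b<N k. norm (grad k w (x k b))) \<le> Gam w"
  unfolding Gam_def by (intro member_le_sum[where f="\<lambda>k. \<Sum>b<N k. norm (grad k w (x k b))"]) (auto intro!: sum_nonneg)

lemma nI_nonneg: "nI K N \<ge> 0"
  unfolding nI_def by (auto intro!: sum_nonneg)

lemma finite_asel: "finite (set_pmf asel)"
proof -
  have "set_pmf asel \<subseteq> Pow {..<K}" using IA unfolding instance_assms_def agent_design_def by auto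
  thus ?thesis by (rule finite_subset) simp
qed

lemma finite_bsel: "k < K \<Longrightarrow> finite (set_pmf (bsel k))"
proof -
  assume k: "k < K"
  have "batch_design (N k) (B k) (pn k) (bsel k)" using IA k by (simp add: instance_assms_def)
  hence "set_pmf (bsel k) \<subseteq> Pow {..<N k}" unfolding batch_design_def by auto
  thus ?thesis by (rule finite_subset) simp
qed

lemma set_rnd: "set_pmf rnd = set_pmf asel \<times> PiE_dflt (SIGMA k:{..<K}. {1..E k}) {} (set_pmf \<circ> (\<lambda>(k, e). bsel k))"
  unfolding round_pmf_def by (simp add: set_Pi_pmf)

lemma finite_rnd: "finite (set_pmf rnd)"
  unfolding set_rnd
  using finite_asel finite_bsel by (intro finite_cartesian_product finite_PiE_dflt) auto

lemma rnd_fst: "\<omega> \<in> set_pmf rnd \<Longrightarrow> fst \<omega> \<subseteq> {..<K} \<and> card (fst \<omega>) = L \<and> finite (fst \<omega>)"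
proof -
  assume "\<omega> \<in> set_pmf rnd"
  hence "fst \<omega> \<in> set_pmf asel" unfolding set_rnd by auto
  hence "fst \<omega> \<subseteq> {..<K} \<and> card (fst \<omega>) = L"
    using IA unfolding instance_assms_def agent_design_def by auto
  thus ?thesis using finite_subset by blast
qed

lemma rnd_snd: "\<omega> \<in> set_pmf rnd \<Longrightarrow> k < K \<Longrightarrow> 1 \<le> e \<Longrightarrow> e \<le> E k \<Longrightarrow> snd \<omega> (k, e) \<subseteq> {..<N k}"
proof -
  assume w: "\<omega> \<in> set_pmf rnd" and k: "k < K" and e: "1 \<le> e" "e \<le> E k"
  hence "snd \<omega> (k, e) \<in> set_pmf (bsel k)" unfolding set_rnd PiE_dflt_def by auto
  moreover have "batch_design (N k) (B k) (pn k) (bsel k)" using IA k by (simp add: instance_assms_def)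
  ultimately show ?thesis unfolding batch_design_def by auto
qed


lemma mu_small: "0 \<le> \<mu> \<Longrightarrow> \<mu> \<le> mu01 K p N E B pn \<delta> \<Longrightarrow> \<mu> * (\<alpha> * nI K N * \<delta>) \<le> 1"
proof -
  assume m: "0 \<le> \<mu>" "\<mu> \<le> mu01 K p N E B pn \<delta>"
  define t where "t = \<alpha> * nI K N * \<delta>"
  have t0: "t \<ge> 0" unfolding t_def using alpha_nonneg nI_nonneg delta_nonneg by simp
  have "\<mu> \<le> 1 / (1 + t)" using m delta_nonneg alpha_nonneg unfolding mu01_def t_def by simp
  hence "\<mu> * (1 + t) \<le> 1" using t0 by (simp add: field_simps)
  thus ?thesis using m t0 unfolding t_def[symmetric] by (simp add: algebra_simps)
qed

lemma r_bound:
  assumes w: "\<omega> \<in> set_pmf rnd" and k: "k < K" and mu: "0 \<le> \<mu>" "\<mu> \<le> mu01 K p N E B pn \<delta>"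
  shows "e \<le> E k \<Longrightarrow> norm (local_iter \<mu> K p N E B pn G k v (snd \<omega>) e - v) \<le> (2 ^ e - 1) * \<mu> * \<alpha> * Gam v"
proof (induction e)
  case 0
  then show ?case by simp
next
  case (Suc e)
  define it where "it = local_iter \<mu> K p N E B pn G k v (snd \<omega>) e"
  define r where "r = norm (it - v)"
  define bs where "bs = snd \<omega> (k, Suc e)"
  have IH: "r \<le> (2 ^ e - 1) * \<mu> * \<alpha> * Gam v" using Suc by (simp add: r_def it_def)
  have bs: "bs \<subseteq> {..<N k}" unfolding bs_def using rnd_snd[OF w k] Suc.prems by simp
  have eq: "local_iter \<mu> K p N E B pn G k v (snd \<omega>) (Suc e) - v
      = (it - v) - (\<mu> * cc K p E B k) *\<^sub>R (\<Sum>b\<in>bs. aa N pn k b *\<^sub>R G k b it)"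
    by (simp add: cc_def aa_def it_def bs_def)
  have trm: "cc K p E B k * aa N pn k b * norm (G k b it) \<le> \<alpha> * (norm (G k b v) + \<delta> * r)"
    if b: "b < N k" for b
  proof -
    have "norm (G k b it) \<le> norm (G k b v) + norm (G k b it - G k b v)"
      by (metis add.commute diff_add_cancel norm_triangle_ineq)
    also have "\<dots> \<le> norm (G k b v) + \<delta> * r"
      using lip[OF k b, of it v] unfolding r_def by simp
    finally have "norm (G k b it) \<le> norm (G k b v) + \<delta> * r" .
    thus ?thesis
      using ca_le_alpha[OF k b] ca_nonneg[OF k b] by (intro mult_mono) auto
  qed
  have "norm (\<Sum>b\<in>bs. aa N pn k b *\<^sub>R G k b it) \<le> (\<Sum>b\<in>bs. norm (aa N pn k b *\<^sub>R G k b it))"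
    by (rule norm_sum)
  also have "\<dots> = (\<Sum>b\<in>bs. aa N pn k b * norm (G k b it))"
    using bs aa_pos[OF k] by (intro sum.cong) (auto simp: less_imp_le)
  finally have n1: "norm (\<Sum>b\<in>bs. aa N pn k b *\<^sub>R G k b it) \<le> (\<Sum>b\<in>bs. aa N pn k b * norm (G k b it))" .
  have "norm ((\<mu> * cc K p E B k) *\<^sub>R (\<Sum>b\<in>bs. aa N pn k b *\<^sub>R G k b it))
      = \<mu> * (cc K p E B k * norm (\<Sum>b\<in>bs. aa N pn k b *\<^sub>R G k b it))"
    using mu cc_pos[OF k] by simp
  also have "\<dots> \<le> \<mu> * (cc K p E B k * (\<Sum>b\<in>bs. aa N pn k b * norm (G k b it)))"
    using mu cc_pos[OF k] n1 by (intro mult_left_mono) auto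
  also have "\<dots> = \<mu> * (\<Sum>b\<in>bs. cc K p E B k * aa N pn k b * norm (G k b it))"
    by (simp add: sum_distrib_left mult.assoc)
  also have "\<dots> \<le> \<mu> * (\<Sum>b\<in>{..<N k}. cc K p E B k * aa N pn k b * norm (G k b it))"
    using mu bs ca_nonneg[OF k] by (intro mult_left_mono sum_mono2) auto
  also have "\<dots> \<le> \<mu> * (\<Sum>b\<in>{..<N k}. \<alpha> * (norm (G k b v) + \<delta> * r))"
    using mu trm by (intro mult_left_mono sum_mono) auto
  also have "\<dots> = \<mu> * \<alpha> * ((\<Sum>b<N k. norm (G k b v)) + real (N k) * \<delta> * r)"
    by (simp add: sum_distrib_left sum.distrib algebra_simps)
  also have "\<dots> \<le> \<mu> * \<alpha> * (Gam v + nI K N * \<delta> * r)"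
    using mu alpha_nonneg Gamk_le[OF k, of v] Nk_le_nI[OF k] delta_nonneg
    by (intro mult_left_mono add_mono mult_right_mono) (auto simp: r_def)
  finally have n2: "norm ((\<mu> * cc K p E B k) *\<^sub>R (\<Sum>b\<in>bs. aa N pn k b *\<^sub>R G k b it))
      \<le> \<mu> * \<alpha> * (Gam v + nI K N * \<delta> * r)" .
  have "norm (local_iter \<mu> K p N E B pn G k v (snd \<omega>) (Suc e) - v)
      \<le> r + \<mu> * \<alpha> * (Gam v + nI K N * \<delta> * r)"
    unfolding eq using r_def n2 norm_triangle_ineq4[of "it - v" "(\<mu> * cc K p E B k) *\<^sub>R (\<Sum>b\<in>bs. aa N pn k b *\<^sub>R G k b it)"]
    by linarith
  also have "\<dots> = r + \<mu> * \<alpha> * Gam v + (\<mu> * (\<alpha> * nI K N * \<delta>)) * r"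
    by (simp add: algebra_simps)
  also have "\<dots> \<le> r + \<mu> * \<alpha> * Gam v + 1 * r"
    using mu_small[OF mu] by (intro add_left_mono mult_right_mono) (auto simp: r_def)
  also have "\<dots> \<le> 2 * ((2 ^ e - 1) * \<mu> * \<alpha> * Gam v) + \<mu> * \<alpha> * Gam v"
    using IH by simp
  also have "\<dots> = (2 ^ Suc e - 1) * \<mu> * \<alpha> * Gam v"
    by (simp add: algebra_simps)
  finally show ?case .
qed


lemma q_bound:
  assumes w: "\<omega> \<in> set_pmf rnd" and mu: "0 \<le> \<mu>" "\<mu> \<le> mu01 K p N E B pn \<delta>"
  shows "norm (incr_noise \<mu> K L p N E B pn G v \<omega>) \<le> \<mu> * beta K p N E B pn \<delta> * Gam v"
proof -
  define S where "S = fst \<omega>"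
  define X where "X = \<delta> * 2 ^ Es K E * \<mu> * \<alpha> * Gam v"
  have X0: "X \<ge> 0" unfolding X_def using delta_nonneg mu alpha_nonneg Gam_nonneg by simp
  define it where "it l e = local_iter \<mu> K p N E B pn G l v (snd \<omega>) e" for l e
  define Y where "Y l = (\<Sum>e\<in>{1..E l}. \<Sum>b\<in>snd \<omega> (l, e). aa N pn l b *\<^sub>R (G l b (it l (e - 1)) - G l b v))" for l
  have S: "S \<subseteq> {..<K}" "card S = L" "finite S" using rnd_fst[OF w] unfolding S_def by auto
  have Yb: "cc K p E B l * norm (Y l) \<le> real (E l) * real (N l) * (\<alpha> * X)" if l: "l < K" for l
  proof -
    have D: "cc K p E B l * aa N pn l b * norm (G l b (it l (e - 1)) - G l b v) \<le> \<alpha> * X"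
      if e: "e \<in> {1..E l}" and b: "b < N l" for e b
    proof -
      have "norm (G l b (it l (e - 1)) - G l b v) \<le> \<delta> * norm (it l (e - 1) - v)"
        by (rule lip[OF l b])
      also have "\<dots> \<le> \<delta> * ((2 ^ (e - 1) - 1) * \<mu> * \<alpha> * Gam v)"
        using r_bound[OF w l mu, of "e - 1" v] e delta_nonneg unfolding it_def
        by (intro mult_left_mono) auto
      also have "\<dots> \<le> \<delta> * (2 ^ Es K E * \<mu> * \<alpha> * Gam v)"
      proof -
        have "e - 1 \<le> Es K E" using Ek_le_Es[OF l] e by auto
        hence "(2::real) ^ (e - 1) \<le> 2 ^ Es K E"
          by (rule power_increasing) simp
        hence "(2 ^ (e - 1) - 1::real) \<le> 2 ^ Es K E" by linarith
        thus ?thesis using delta_nonneg mu alpha_nonneg Gam_nonneg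
          by (intro mult_left_mono mult_right_mono) auto
      qed
      finally have "norm (G l b (it l (e - 1)) - G l b v) \<le> X" unfolding X_def by (simp add: algebra_simps)
      thus ?thesis using ca_le_alpha[OF l b] ca_nonneg[OF l b] X0 by (intro mult_mono) auto
    qed
    have "norm (Y l) \<le> (\<Sum>e\<in>{1..E l}. norm (\<Sum>b\<in>snd \<omega> (l, e). aa N pn l b *\<^sub>R (G l b (it l (e - 1)) - G l b v)))"
      unfolding Y_def by (rule norm_sum)
    also have "\<dots> \<le> (\<Sum>e\<in>{1..E l}. \<Sum>b\<in>snd \<omega> (l, e). norm (aa N pn l b *\<^sub>R (G l b (it l (e - 1)) - G l b v)))"
      by (intro sum_mono norm_sum)
    also have "\<dots> = (\<Sum>e\<in>{1..E l}. \<Sum>b\<in>snd \<omega> (l, e). aa N pn l b * norm (G l b (it l (e - 1)) - G l b v))"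
    proof (intro sum.cong refl)
      fix e b assume "e \<in> {1..E l}" "b \<in> snd \<omega> (l, e)"
      hence "b < N l" using rnd_snd[OF w l] by auto
      thus "norm (aa N pn l b *\<^sub>R (G l b (it l (e - 1)) - G l b v)) = aa N pn l b * norm (G l b (it l (e - 1)) - G l b v)"
        using aa_pos[OF l] by (simp add: less_imp_le)
    qed
    finally have "cc K p E B l * norm (Y l) \<le> cc K p E B l * (\<Sum>e\<in>{1..E l}. \<Sum>b\<in>snd \<omega> (l, e). aa N pn l b * norm (G l b (it l (e - 1)) - G l b v))"
      using cc_pos[OF l] by (intro mult_left_mono) auto
    also have "\<dots> = (\<Sum>e\<in>{1..E l}. \<Sum>b\<in>snd \<omega> (l, e). cc K p E B l * aa N pn l b * norm (G l b (it l (e - 1)) - G l b v))"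
      by (simp add: sum_distrib_left mult.assoc)
    also have "\<dots> \<le> (\<Sum>e\<in>{1..E l}. \<Sum>b\<in>snd \<omega> (l, e). \<alpha> * X)"
    proof (intro sum_mono)
      fix e b assume "e \<in> {1..E l}" "b \<in> snd \<omega> (l, e)"
      thus "cc K p E B l * aa N pn l b * norm (G l b (it l (e - 1)) - G l b v) \<le> \<alpha> * X"
        using rnd_snd[OF w l] D by auto
    qed
    also have "\<dots> \<le> (\<Sum>e\<in>{1..E l}. \<Sum>b\<in>{..<N l}. \<alpha> * X)"
      using rnd_snd[OF w l] alpha_nonneg X0 by (intro sum_mono sum_mono2) auto
    also have "\<dots> = real (E l) * real (N l) * (\<alpha> * X)" by simp
    finally show ?thesis .
  qed
  have "norm (incr_noise \<mu> K L p N E B pn G v \<omega>) = (1 / real L) * norm (\<Sum>l\<in>S. cc K p E B l *\<^sub>R Y l)"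
    unfolding incr_noise_def S_def Y_def it_def cc_def aa_def by simp
  also have "\<dots> \<le> (1 / real L) * (\<Sum>l\<in>S. norm (cc K p E B l *\<^sub>R Y l))"
    by (intro mult_left_mono norm_sum) auto
  also have "\<dots> = (1 / real L) * (\<Sum>l\<in>S. cc K p E B l * norm (Y l))"
    using S cc_pos by (intro arg_cong[where f="\<lambda>t. (1 / real L) * t"] sum.cong) (auto simp: less_imp_le)
  also have "\<dots> \<le> 1 * (\<Sum>l\<in>S. cc K p E B l * norm (Y l))"
  proof (intro mult_right_mono sum_nonneg)
    fix l assume "l \<in> S"
    hence "l < K" using S by auto
    thus "0 \<le> cc K p E B l * norm (Y l)" by (meson cc_pos less_imp_le mult_nonneg_nonneg norm_ge_zero)
  qed (use L1 in auto)
  also have "\<dots> \<le> (\<Sum>l\<in>S. real (E l) * real (N l) * (\<alpha> * X))"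
    using S Yb by (auto intro!: sum_mono)
  also have "\<dots> \<le> (\<Sum>l<K. real (E l) * real (N l) * (\<alpha> * X))"
    using S alpha_nonneg X0 by (intro sum_mono2) auto
  also have "\<dots> = \<mu> * beta K p N E B pn \<delta> * Gam v"
    unfolding sum_distrib_right[symmetric] beta_def X_def using delta_nonneg by (simp add: power2_eq_square mult_ac)
  finally show ?thesis .
qed

lemma step_bound:
  assumes w: "\<omega> \<in> set_pmf rnd" and mu: "0 \<le> \<mu>" "\<mu> \<le> mu01 K p N E B pn \<delta>"
  shows "norm (fedavg_next \<mu> K L p N E B pn G v \<omega> - v) \<le> 2 ^ Es K E * \<mu> * \<alpha> * Gam v"
proof -
  define S where "S = fst \<omega>"
  have S: "S \<subseteq> {..<K}" "card S = L" "finite S" using rnd_fst[OF w] unfolding S_def by auto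
  have Lp: "L > 0" using L1 by simp
  define Z where "Z = 2 ^ Es K E * \<mu> * \<alpha> * Gam v"
  have "norm (fedavg_next \<mu> K L p N E B pn G v \<omega> - v)
      = (1 / real L) * norm (\<Sum>l\<in>S. local_iter \<mu> K p N E B pn G l v (snd \<omega>) (E l) - v)"
  proof -
    have "fedavg_next \<mu> K L p N E B pn G v \<omega> - v
       = (1 / real L) *\<^sub>R (\<Sum>l\<in>S. local_iter \<mu> K p N E B pn G l v (snd \<omega>) (E l) - v)"
      unfolding S_def by (rule next_minus) (use S Lp in \<open>auto simp: S_def\<close>)
    thus ?thesis by simp
  qed
  also have "\<dots> \<le> (1 / real L) * (\<Sum>l\<in>S. norm (local_iter \<mu> K p N E B pn G l v (snd \<omega>) (E l) - v))"
    by (intro mult_left_mono norm_sum) auto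
  also have "\<dots> \<le> (1 / real L) * (\<Sum>l\<in>S. Z)"
  proof (intro mult_left_mono sum_mono)
    fix l assume l: "l \<in> S"
    hence lK: "l < K" using S by auto
    have "norm (local_iter \<mu> K p N E B pn G l v (snd \<omega>) (E l) - v) \<le> (2 ^ E l - 1) * \<mu> * \<alpha> * Gam v"
      by (rule r_bound[OF w lK mu]) simp
    also have "\<dots> \<le> Z"
    proof -
      have "(2::real) ^ E l \<le> 2 ^ Es K E"
        using Ek_le_Es[OF lK] by (intro power_increasing) auto
      hence "(2 ^ E l - 1::real) \<le> 2 ^ Es K E" by linarith
      thus ?thesis unfolding Z_def using mu alpha_nonneg Gam_nonneg
        by (intro mult_right_mono) auto
    qed
    finally show "norm (local_iter \<mu> K p N E B pn G l v (snd \<omega>) (E l) - v) \<le> Z" .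
  qed auto
  also have "\<dots> = Z" using S Lp by simp
  finally show ?thesis unfolding Z_def .
qed


abbreviation "PI \<equiv> Pi_pmf (SIGMA k:{..<K}. {1..E k}) {} (\<lambda>(k, e). bsel k)"

lemma rnd_pair: "rnd = pair_pmf asel PI"
  unfolding round_pmf_def by simp

lemma finite_PI: "finite (set_pmf PI)"
  using finite_bsel by (subst set_Pi_pmf) (auto intro!: finite_PiE_dflt)

lemma E_PI_comp:
  assumes "k < K" "1 \<le> e" "e \<le> E k"
  shows "measure_pmf.expectation PI (\<lambda>bs. g (bs (k, e))) = measure_pmf.expectation (bsel k) (g :: nat set \<Rightarrow> real)"
proof -
  have "measure_pmf.expectation PI (\<lambda>bs. g (bs (k, e)))
      = measure_pmf.expectation (map_pmf (\<lambda>f. f (k, e)) PI) g" by simp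
  also have "map_pmf (\<lambda>f. f (k, e)) PI = bsel k"
    using assms by (subst Pi_pmf_component) auto
  finally show ?thesis .
qed

lemma E_batch_sum:
  assumes "k < K"
  shows "measure_pmf.expectation (bsel k) (\<lambda>X. \<Sum>b\<in>X. f b) = (\<Sum>n<N k. real (B k) * pn k n * f n)"
proof -
  have bd: "batch_design (N k) (B k) (pn k) (bsel k)" using IA assms by (simp add: instance_assms_def)
  have "measure_pmf.expectation (bsel k) (\<lambda>X. \<Sum>b\<in>X. f b) = (\<Sum>n<N k. measure_pmf.prob (bsel k) {S. n \<in> S} * f n)"
    by (rule exp_sum_set) (use bd in \<open>auto simp: batch_design_def\<close>)
  also have "\<dots> = (\<Sum>n<N k. real (B k) * pn k n * f n)"
    using bd by (intro sum.cong) (auto simp: batch_design_def)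
  finally show ?thesis .
qed

lemma E_agent_sum:
  "measure_pmf.expectation asel (\<lambda>S. \<Sum>l\<in>S. f l) = (\<Sum>l<K. real L * p l * f l)"
proof -
  have ad: "agent_design K L p asel" using IA by (simp add: instance_assms_def)
  have "measure_pmf.expectation asel (\<lambda>S. \<Sum>l\<in>S. f l) = (\<Sum>l<K. measure_pmf.prob asel {S. l \<in> S} * f l)"
    by (rule exp_sum_set) (use ad in \<open>auto simp: agent_design_def\<close>)
  also have "\<dots> = (\<Sum>l<K. real L * p l * f l)"
    using ad by (intro sum.cong) (auto simp: agent_design_def)
  finally show ?thesis .
qed

lemma E_sdir:
  "measure_pmf.expectation rnd (\<lambda>\<omega>. inner d (sdir K L p N E B pn G v \<omega>))
   = (\<Sum>k<K. (1 / real K) * ((1 / real (N k)) * (\<Sum>n<N k. inner d (G k n v))))"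
proof -
  define h where "h l b = aa N pn l b * inner d (G l b v)" for l b
  define V where "V l = cc K p E B l * (\<Sum>e\<in>{1..E l}. \<Sum>n<N l. real (B l) * pn l n * h l n)" for l
  have inner_eq: "inner d (sdir K L p N E B pn G v \<omega>)
      = (1 / real L) * (\<Sum>l\<in>fst \<omega>. cc K p E B l * (\<Sum>e\<in>{1..E l}. \<Sum>b\<in>snd \<omega> (l, e). h l b))" for \<omega>
    unfolding sdir_def h_def by (simp add: inner_sum_right)
  have inner_PI: "measure_pmf.expectation PI (\<lambda>bs. (1 / real L) * (\<Sum>l\<in>S. cc K p E B l * (\<Sum>e\<in>{1..E l}. \<Sum>b\<in>bs (l, e). h l b)))
      = (1 / real L) * (\<Sum>l\<in>S. V l)" if S: "S \<in> set_pmf asel" for S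
  proof -
    have SK: "S \<subseteq> {..<K}" using IA S unfolding instance_assms_def agent_design_def by auto
    have "measure_pmf.expectation PI (\<lambda>bs. (1 / real L) * (\<Sum>l\<in>S. cc K p E B l * (\<Sum>e\<in>{1..E l}. \<Sum>b\<in>bs (l, e). h l b)))
        = (1 / real L) * (\<Sum>l\<in>S. cc K p E B l * (\<Sum>e\<in>{1..E l}. measure_pmf.expectation PI (\<lambda>bs. \<Sum>b\<in>bs (l, e). h l b)))"
    proof -
      have lin: "measure_pmf.expectation PI (\<lambda>bs. \<Sum>i\<in>I. f i bs) = (\<Sum>i\<in>I. measure_pmf.expectation PI (f i))"
        for I and f :: "'i \<Rightarrow> (nat \<times> nat \<Rightarrow> nat set) \<Rightarrow> real"
        by (rule Bochner_Integration.integral_sum, rule integrable_measure_pmf_finite, rule finite_PI)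
      show ?thesis
        by (simp only: integral_mult_right_zero lin)
    qed
    also have "\<dots> = (1 / real L) * (\<Sum>l\<in>S. V l)"
    proof (intro arg_cong[where f="\<lambda>t. (1 / real L) * t"] sum.cong refl)
      fix l assume l: "l \<in> S"
      hence lK: "l < K" using SK by auto
      have "(\<Sum>e\<in>{1..E l}. measure_pmf.expectation PI (\<lambda>bs. \<Sum>b\<in>bs (l, e). h l b))
          = (\<Sum>e\<in>{1..E l}. \<Sum>n<N l. real (B l) * pn l n * h l n)"
      proof (intro sum.cong refl)
        fix e assume "e \<in> {1..E l}"
        hence "measure_pmf.expectation PI (\<lambda>bs. \<Sum>b\<in>bs (l, e). h l b) = measure_pmf.expectation (bsel l) (\<lambda>X. \<Sum>b\<in>X. h l b)"
          using lK by (intro E_PI_comp[where g="\<lambda>X. \<Sum>b\<in>X. h l b"]) auto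
        also have "\<dots> = (\<Sum>n<N l. real (B l) * pn l n * h l n)"
          by (rule E_batch_sum[OF lK])
        finally show "measure_pmf.expectation PI (\<lambda>bs. \<Sum>b\<in>bs (l, e). h l b) = (\<Sum>n<N l. real (B l) * pn l n * h l n)" .
      qed
      thus "cc K p E B l * (\<Sum>e\<in>{1..E l}. measure_pmf.expectation PI (\<lambda>bs. \<Sum>b\<in>bs (l, e). h l b)) = V l"
        unfolding V_def by simp
    qed
    finally show ?thesis .
  qed
  have "measure_pmf.expectation rnd (\<lambda>\<omega>. inner d (sdir K L p N E B pn G v \<omega>))
      = measure_pmf.expectation asel (\<lambda>S. measure_pmf.expectation PI (\<lambda>bs.
          (1 / real L) * (\<Sum>l\<in>S. cc K p E B l * (\<Sum>e\<in>{1..E l}. \<Sum>b\<in>bs (l, e). h l b))))"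
    unfolding rnd_pair inner_eq by (subst exp_pair_fin) (use finite_asel finite_PI in auto)
  also have "\<dots> = measure_pmf.expectation asel (\<lambda>S. (1 / real L) * (\<Sum>l\<in>S. V l))"
    by (rule exp_cong_fin[OF finite_asel]) (rule inner_PI)
  also have "\<dots> = (1 / real L) * (\<Sum>l<K. real L * p l * V l)"
    by (simp add: E_agent_sum)
  also have "\<dots> = (\<Sum>k<K. (1 / real K) * ((1 / real (N k)) * (\<Sum>n<N k. inner d (G k n v))))"
    unfolding sum_distrib_left[of "1 / real L"]
  proof (intro sum.cong refl)
    fix l assume "l \<in> {..<K}"
    hence l: "l < K" by simp
    have pl: "p l > 0" using ppos l by simp
    have El: "real (E l) > 0" "real (B l) > 0" using EB l by auto
    have Nl: "real (N l) > 0" using Nk[OF l] by simp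
    have pnl: "\<And>n. n < N l \<Longrightarrow> pn l n > 0" using pnpos l by simp
    have "V l = cc K p E B l * (real (E l) * (\<Sum>n<N l. real (B l) * pn l n * h l n))"
      unfolding V_def by simp
    also have "(\<Sum>n<N l. real (B l) * pn l n * h l n) = (\<Sum>n<N l. real (B l) / real (N l) * inner d (G l n v))"
    proof (intro sum.cong refl)
      fix n assume "n \<in> {..<N l}"
      hence "pn l n > 0" using pnl by simp
      thus "real (B l) * pn l n * h l n = real (B l) / real (N l) * inner d (G l n v)"
        using Nl by (simp add: h_def aa_def field_simps)
    qed
    finally have "V l = cc K p E B l * (real (E l) * (real (B l) / real (N l) * (\<Sum>n<N l. inner d (G l n v))))"
      by (simp add: sum_distrib_left)
    thus "1 / real L * (real L * p l * V l) = 1 / real K * (1 / real (N l) * (\<Sum>n<N l. inner d (G l n v)))"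
      using pl El Nl L1 unfolding cc_def by (simp add: field_simps)
  qed
  finally show ?thesis .
qed


definition gP :: "nat \<Rightarrow> 'a \<Rightarrow> 'a" where
  "gP k v = (1 / real (N k)) *\<^sub>R (\<Sum>n<N k. grad k v (x k n))"

lemma P_deriv:
  assumes k: "k < K"
  shows "((\<lambda>w. emp_risk N Q x k w) has_derivative (\<lambda>h. inner (gP k v) h)) (at v)"
proof -
  have d: "\<forall>n<N k. ((\<lambda>w. Q k w (x k n)) has_derivative (\<lambda>h. inner (grad k v (x k n)) h)) (at v)"
    using IA k unfolding instance_assms_def by blast
  have "((\<lambda>w. \<Sum>n<N k. Q k w (x k n)) has_derivative (\<lambda>h. \<Sum>n<N k. inner (grad k v (x k n)) h)) (at v)"
    by (rule has_derivative_sum) (use d in auto)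
  hence "((\<lambda>w. (1 / real (N k)) * (\<Sum>n<N k. Q k w (x k n))) has_derivative
          (\<lambda>h. (1 / real (N k)) * (\<Sum>n<N k. inner (grad k v (x k n)) h))) (at v)"
    by (rule has_derivative_mult_right)
  moreover have "(\<lambda>h. (1 / real (N k)) * (\<Sum>n<N k. inner (grad k v (x k n)) h)) = (\<lambda>h. inner (gP k v) h)"
    by (auto simp: gP_def inner_sum_left)
  ultimately show ?thesis unfolding emp_risk_def by simp
qed

lemma tangent:
  assumes k: "k < K"
  shows "emp_risk N Q x k u \<ge> emp_risk N Q x k v + inner (gP k v) (u - v) + \<nu> / 2 * (norm (u - v))\<^sup>2"
proof -
  define P where "P = emp_risk N Q x k"
  define D where "D = inner (gP k v) (u - v)"
  define c where "c = \<nu> / 2 * (norm (u - v))\<^sup>2"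
  define \<phi> where "\<phi> t = P (v + t *\<^sub>R (u - v))" for t :: real
  have sc: "strongly_convex_fun \<nu> P" using IA k unfolding instance_assms_def P_def by blast
  have line: "((\<lambda>t::real. v + t *\<^sub>R (u - v)) has_derivative (\<lambda>t. t *\<^sub>R (u - v))) (at 0 within {0<..})"
    by (auto intro!: derivative_eq_intros)
  have "(\<phi> has_derivative (\<lambda>t. inner (gP k v) (t *\<^sub>R (u - v)))) (at 0 within {0<..})"
  proof -
    have pd: "(P has_derivative (\<lambda>h. inner (gP k v) h)) (at ((\<lambda>t::real. v + t *\<^sub>R (u - v)) 0))"
      using P_deriv[OF k, of v] unfolding P_def by simp
    show ?thesis unfolding \<phi>_def using has_derivative_compose[OF line pd] by simp
  qed
  moreover have "(\<lambda>t. inner (gP k v) (t *\<^sub>R (u - v))) = (*) D"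
    by (auto simp: D_def)
  ultimately have "(\<phi> has_field_derivative D) (at 0 within {0<..})"
    unfolding has_field_derivative_def by simp
  hence lim: "((\<lambda>y. (\<phi> y - \<phi> 0) / (y - 0)) \<longlongrightarrow> D) (at_right 0)"
    unfolding has_field_derivative_iff .
  have lim2: "((\<lambda>t::real. P u - P v - (1 - t) * c) \<longlongrightarrow> P u - P v - (1 - 0) * c) (at_right 0)"
    by (intro tendsto_intros)
  have ev: "eventually (\<lambda>t. (\<phi> t - \<phi> 0) / (t - 0) \<le> P u - P v - (1 - t) * c) (at_right 0)"
    unfolding eventually_at_right_field
  proof (intro exI[of _ 1] conjI allI impI)
    fix t :: real assume t: "0 < t" "t < 1"
    have "P (t *\<^sub>R u + (1 - t) *\<^sub>R v) \<le> t * P u + (1 - t) * P v - \<nu> / 2 * t * (1 - t) * (norm (u - v))\<^sup>2"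
      using sc t unfolding strongly_convex_fun_def by auto
    moreover have "t *\<^sub>R u + (1 - t) *\<^sub>R v = v + t *\<^sub>R (u - v)"
      by (simp add: algebra_simps)
    ultimately have "\<phi> t - \<phi> 0 \<le> t * (P u - P v - (1 - t) * c)"
      unfolding \<phi>_def c_def by (simp add: algebra_simps)
    thus "(\<phi> t - \<phi> 0) / (t - 0) \<le> P u - P v - (1 - t) * c"
      using t by (simp add: divide_le_eq mult.commute)
  qed simp
  have "D \<le> P u - P v - (1 - 0) * c"
    by (rule tendsto_le[OF trivial_limit_at_right_real lim2 lim ev])
  thus ?thesis unfolding P_def D_def c_def by simp
qed

lemma strong_mono:
  "(\<Sum>k<K. (1 / real K) * ((1 / real (N k)) * (\<Sum>n<N k. inner (w - wo) (G k n w))))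
     \<ge> \<nu> / 2 * (norm (w - wo))\<^sup>2"
proof -
  have Kp: "real K > 0" using K1 by simp
  have each: "(1 / real (N k)) * (\<Sum>n<N k. inner (w - wo) (G k n w))
      \<ge> emp_risk N Q x k w - emp_risk N Q x k wo + \<nu> / 2 * (norm (w - wo))\<^sup>2" if k: "k < K" for k
  proof -
    have "(1 / real (N k)) * (\<Sum>n<N k. inner (w - wo) (G k n w)) = - inner (gP k w) (wo - w)"
      unfolding gP_def by (simp add: inner_sum_left inner_sum_right inner_commute inner_diff_right sum_negf[symmetric] algebra_simps sum_subtractf)
    moreover have "norm (wo - w) = norm (w - wo)" by (rule norm_minus_commute)
    ultimately show ?thesis using tangent[OF k, where u=wo and v=w] by simp
  qed
  have "(\<Sum>k<K. (1 / real K) * ((1 / real (N k)) * (\<Sum>n<N k. inner (w - wo) (G k n w))))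
      \<ge> (\<Sum>k<K. (1 / real K) * (emp_risk N Q x k w - emp_risk N Q x k wo + \<nu> / 2 * (norm (w - wo))\<^sup>2))"
    using each Kp by (intro sum_mono mult_left_mono) auto
  also have "(\<Sum>k<K. (1 / real K) * (emp_risk N Q x k w - emp_risk N Q x k wo + \<nu> / 2 * (norm (w - wo))\<^sup>2))
      = (1 / real K) * (\<Sum>k<K. emp_risk N Q x k w) - (1 / real K) * (\<Sum>k<K. emp_risk N Q x k wo) + \<nu> / 2 * (norm (w - wo))\<^sup>2"
    using Kp by (simp add: sum.distrib sum_subtractf sum_divide_distrib algebra_simps)
  also have "\<dots> \<ge> \<nu> / 2 * (norm (w - wo))\<^sup>2"
    using IA unfolding instance_assms_def by auto
  finally show ?thesis .
qed


definition SG :: real where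
  "SG = (\<Sum>k<K. \<Sum>b<N k. (norm (G k b (wko k)))\<^sup>2)"

definition Gam0 :: real where
  "Gam0 = \<delta> * \<xi> * nI K N + (\<Sum>k<K. \<Sum>b<N k. norm (G k b (wko k)))"

lemma Gam_lin: "Gam w \<le> nI K N * \<delta> * (norm (w - wo)) + Gam0"
proof -
  have t: "norm (G k b w) \<le> \<delta> * norm (w - wo) + \<delta> * \<xi> + norm (G k b (wko k))" if k: "k < K" and b: "b < N k" for k b
  proof -
    have "norm (G k b w) \<le> norm (G k b (wko k)) + norm (G k b w - G k b (wko k))"
      by (metis add.commute diff_add_cancel norm_triangle_ineq)
    also have "\<dots> \<le> norm (G k b (wko k)) + \<delta> * norm (w - wko k)"
      using lip[OF k b] by simp
    also have "norm (w - wko k) \<le> norm (w - wo) + \<xi>"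
    proof -
      have "norm (w - wko k) \<le> norm (w - wo) + norm (wko k - wo)"
        by (metis add.commute diff_add_cancel norm_minus_commute norm_triangle_ineq4 diff_diff_eq2)
      moreover have "norm (wko k - wo) \<le> \<xi>" using IA k unfolding instance_assms_def by auto
      ultimately show ?thesis by simp
    qed
    finally show ?thesis using delta_nonneg
      by (smt (verit, ccfv_SIG) mult_left_mono distrib_left)
  qed
  have "Gam w \<le> (\<Sum>k<K. \<Sum>b<N k. \<delta> * norm (w - wo) + \<delta> * \<xi> + norm (G k b (wko k)))"
    unfolding Gam_def using t by (intro sum_mono) auto
  also have "\<dots> = nI K N * \<delta> * (norm (w - wo)) + Gam0"
    unfolding Gam0_def nI_def by (simp add: sum.distrib sum_distrib_right sum_distrib_left algebra_simps)
  finally show ?thesis .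
qed

lemma Gam_lin2: "Gam w \<le> nI K N * \<delta> * (norm (w - wo) + \<xi>) + (\<Sum>k<K. \<Sum>b<N k. norm (G k b (wko k)))"
  using Gam_lin[of w] unfolding Gam0_def by (simp add: algebra_simps)

lemma card_I: "card (SIGMA k:{..<K}. {..<N k}) = (\<Sum>k<K. N k)"
  by (simp add: card_SigmaI)

lemma sumg_sq: "(\<Sum>k<K. \<Sum>b<N k. norm (G k b (wko k)))\<^sup>2 \<le> nI K N * SG"
proof -
  have "(\<Sum>k<K. \<Sum>b<N k. norm (G k b (wko k))) = (\<Sum>(k, b)\<in>(SIGMA k:{..<K}. {..<N k}). norm (G k b (wko k)))"
    by (rule sum.Sigma) auto
  moreover have "SG = (\<Sum>(k, b)\<in>(SIGMA k:{..<K}. {..<N k}). (norm (G k b (wko k)))\<^sup>2)"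
    unfolding SG_def by (rule sum.Sigma) auto
  moreover have "(\<Sum>(k, b)\<in>(SIGMA k:{..<K}. {..<N k}). norm (G k b (wko k)))\<^sup>2
      \<le> (\<Sum>(k, b)\<in>(SIGMA k:{..<K}. {..<N k}). (norm (G k b (wko k)))\<^sup>2) * card (SIGMA k:{..<K}. {..<N k})"
    using sum_squared_le_sum_of_squares[of "\<lambda>(k, b). norm (G k b (wko k))" "SIGMA k:{..<K}. {..<N k}"]
    by (simp add: case_prod_beta)
  ultimately show ?thesis unfolding card_I nI_def by (simp add: mult.commute)
qed

lemma SG_nonneg: "SG \<ge> 0" unfolding SG_def by (auto intro!: sum_nonneg)

lemma Gam0_nonneg: "Gam0 \<ge> 0"
  unfolding Gam0_def using delta_nonneg xi_nonneg nI_nonneg by (auto intro!: sum_nonneg add_nonneg_nonneg)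

lemma sq_sum2: "(a + b)\<^sup>2 \<le> 2 * a\<^sup>2 + 2 * (b::real)\<^sup>2"
proof -
  have "0 \<le> (a - b)\<^sup>2" by simp
  thus ?thesis by (simp add: power2_eq_square algebra_simps)
qed

lemma Gam_sq: "(Gam w)\<^sup>2 \<le> 4 * (nI K N)\<^sup>2 * \<delta>\<^sup>2 * (norm (w - wo))\<^sup>2 + 4 * (nI K N)\<^sup>2 * \<delta>\<^sup>2 * \<xi>\<^sup>2 + 2 * nI K N * SG"
proof -
  define a where "a = nI K N * \<delta> * (norm (w - wo) + \<xi>)"
  define g where "g = (\<Sum>k<K. \<Sum>b<N k. norm (G k b (wko k)))"
  have "(Gam w)\<^sup>2 \<le> (a + g)\<^sup>2"
    using Gam_lin2[of w] Gam_nonneg[of w] unfolding a_def g_def by (intro power_mono) auto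
  also have "\<dots> \<le> 2 * a\<^sup>2 + 2 * g\<^sup>2" by (rule sq_sum2)
  also have "2 * a\<^sup>2 \<le> 4 * (nI K N)\<^sup>2 * \<delta>\<^sup>2 * (norm (w - wo))\<^sup>2 + 4 * (nI K N)\<^sup>2 * \<delta>\<^sup>2 * \<xi>\<^sup>2"
  proof -
    have "(norm (w - wo) + \<xi>)\<^sup>2 \<le> 2 * (norm (w - wo))\<^sup>2 + 2 * \<xi>\<^sup>2" by (rule sq_sum2)
    hence "(nI K N * \<delta>)\<^sup>2 * (norm (w - wo) + \<xi>)\<^sup>2 \<le> (nI K N * \<delta>)\<^sup>2 * (2 * (norm (w - wo))\<^sup>2 + 2 * \<xi>\<^sup>2)"
      by (intro mult_left_mono) auto
    moreover have "a\<^sup>2 = (nI K N * \<delta>)\<^sup>2 * (norm (w - wo) + \<xi>)\<^sup>2"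
      unfolding a_def by (simp add: power_mult_distrib)
    moreover have "2 * ((nI K N * \<delta>)\<^sup>2 * (2 * (norm (w - wo))\<^sup>2 + 2 * \<xi>\<^sup>2))
       = 4 * (nI K N)\<^sup>2 * \<delta>\<^sup>2 * (norm (w - wo))\<^sup>2 + 4 * (nI K N)\<^sup>2 * \<delta>\<^sup>2 * \<xi>\<^sup>2"
      by (simp add: power_mult_distrib algebra_simps)
    ultimately show ?thesis by linarith
  qed
  also have "2 * g\<^sup>2 \<le> 2 * (nI K N * SG)" using sumg_sq unfolding g_def by simp
  finally show ?thesis by simp
qed

lemma SG_bound: "SG \<le> real K * Wc K N B * ((1 / real K) * (\<Sum>k<K. sigma_q2 N B pn G wko k))"
proof -
  have sig_nonneg: "sigma_q2 N B pn G wko k \<ge> 0" if k: "k < K" for k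
  proof -
    have "0 \<le> (1 / pn k n) * (norm (G k n (wko k)))\<^sup>2" if n: "n < N k" for n
    proof -
      have "pn k n > 0" using pnpos k n by auto
      thus ?thesis by simp
    qed
    hence "0 \<le> (\<Sum>n<N k. (1 / pn k n) * (norm (G k n (wko k)))\<^sup>2)" by (intro sum_nonneg) auto
    thus ?thesis unfolding sigma_q2_def by simp
  qed
  have each: "(\<Sum>b<N k. (norm (G k b (wko k)))\<^sup>2) \<le> real (B k) * (real (N k))\<^sup>2 / 3 * sigma_q2 N B pn G wko k"
    if k: "k < K" for k
  proof -
    have Bp: "real (B k) > 0" "real (N k) > 0" using EB Nk k by auto
    have "(\<Sum>b<N k. (norm (G k b (wko k)))\<^sup>2) \<le> (\<Sum>b<N k. (1 / pn k b) * (norm (G k b (wko k)))\<^sup>2)"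
    proof (intro sum_mono)
      fix b assume "b \<in> {..<N k}"
      hence b: "b < N k" by simp
      have pp: "pn k b > 0" using pnpos k b by auto
      have "pn k b \<le> (\<Sum>n<N k. pn k n)"
        using pnpos k b by (intro member_le_sum) (auto simp: less_imp_le)
      hence "pn k b \<le> 1" using pnpos k by simp
      hence "1 \<le> 1 / pn k b" using pp by (simp add: field_simps)
      thus "(norm (G k b (wko k)))\<^sup>2 \<le> (1 / pn k b) * (norm (G k b (wko k)))\<^sup>2"
        using mult_right_mono[of 1 "1 / pn k b" "(norm (G k b (wko k)))\<^sup>2"] by simp
    qed
    also have "\<dots> = real (B k) * (real (N k))\<^sup>2 / 3 * sigma_q2 N B pn G wko k"
      unfolding sigma_q2_def using Bp by (simp add: field_simps)
    finally show ?thesis .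
  qed
  have "SG \<le> (\<Sum>k<K. real (B k) * (real (N k))\<^sup>2 / 3 * sigma_q2 N B pn G wko k)"
    unfolding SG_def using each by (intro sum_mono) auto
  also have "\<dots> \<le> (\<Sum>k<K. Wc K N B * sigma_q2 N B pn G wko k)"
  proof (intro sum_mono mult_right_mono)
    fix k assume "k \<in> {..<K}"
    hence k: "k < K" by simp
    show "real (B k) * (real (N k))\<^sup>2 / 3 \<le> Wc K N B"
      unfolding Wc_def using k
      by (intro member_le_sum[where f="\<lambda>k. real (B k) * (real (N k))\<^sup>2 / 3"]) auto
    show "0 \<le> sigma_q2 N B pn G wko k" using sig_nonneg k by simp
  qed
  also have "\<dots> = real K * Wc K N B * ((1 / real K) * (\<Sum>k<K. sigma_q2 N B pn G wko k))"
    using K1 by (simp add: sum_distrib_left)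
  finally show ?thesis .
qed


lemma finite_iter: "finite (set_pmf (iterates \<mu> K L p N E B pn G asel bsel w0 j))"
proof (induction j)
  case 0
  then show ?case by simp
next
  case (Suc j)
  then show ?case using finite_rnd by (simp add: set_bind_pmf)
qed

abbreviation "C1c \<equiv> C1g K p N E B pn \<delta>"
abbreviation "C3c \<equiv> C3g K p N E B pn \<delta>"

abbreviation "avgsig \<equiv> (1 / real K) * (\<Sum>k<K. sigma_q2 N B pn G wko k)"

lemma avgsig_nonneg: "avgsig \<ge> 0"
proof -
  have "sigma_q2 N B pn G wko k \<ge> 0" if k: "k < K" for k
  proof -
    have "0 \<le> (1 / pn k n) * (norm (G k n (wko k)))\<^sup>2" if n: "n < N k" for n
    proof -
      have "pn k n > 0" using pnpos k n by auto
      thus ?thesis by simp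
    qed
    hence "0 \<le> (\<Sum>n<N k. (1 / pn k n) * (norm (G k n (wko k)))\<^sup>2)" by (intro sum_nonneg) auto
    thus ?thesis unfolding sigma_q2_def by simp
  qed
  hence "0 \<le> (\<Sum>k<K. sigma_q2 N B pn G wko k)" by (intro sum_nonneg) auto
  thus ?thesis by simp
qed

lemma Wc_nonneg: "Wc K N B \<ge> 0" unfolding Wc_def by (auto intro!: sum_nonneg)

lemma noise_pointwise:
  assumes mu: "0 < \<mu>" "\<mu> \<le> mu01 K p N E B pn \<delta>"
  shows "measure_pmf.expectation rnd (\<lambda>\<omega>. (norm (incr_noise \<mu> K L p N E B pn G w \<omega>))\<^sup>2)
     \<le> (\<mu>\<^sup>2 * (beta K p N E B pn \<delta>)\<^sup>2 * (4 * (nI K N)\<^sup>2 * \<delta>\<^sup>2)) * (norm (wo - w))\<^sup>2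
       + (\<mu>\<^sup>2 * (beta K p N E B pn \<delta>)\<^sup>2 * (4 * (nI K N)\<^sup>2 * \<delta>\<^sup>2) * \<xi>\<^sup>2
       + \<mu>\<^sup>2 * (beta K p N E B pn \<delta>)\<^sup>2 * (2 * nI K N * real K * Wc K N B) * avgsig)"
proof -
  define \<beta> where "\<beta> = beta K p N E B pn \<delta>"
  have "measure_pmf.expectation rnd (\<lambda>\<omega>. (norm (incr_noise \<mu> K L p N E B pn G w \<omega>))\<^sup>2)
      \<le> measure_pmf.expectation rnd (\<lambda>\<omega>. (\<mu> * \<beta> * Gam w)\<^sup>2)"
  proof (rule exp_mono_fin[OF finite_rnd])
    fix \<omega> assume "\<omega> \<in> set_pmf rnd"
    thus "(norm (incr_noise \<mu> K L p N E B pn G w \<omega>))\<^sup>2 \<le> (\<mu> * \<beta> * Gam w)\<^sup>2"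
      using q_bound[of \<omega> \<mu> w] mu unfolding \<beta>_def by (intro power_mono) auto
  qed
  also have "\<dots> = \<mu>\<^sup>2 * \<beta>\<^sup>2 * (Gam w)\<^sup>2" by (simp add: power_mult_distrib)
  also have "\<dots> \<le> \<mu>\<^sup>2 * \<beta>\<^sup>2 * (4 * (nI K N)\<^sup>2 * \<delta>\<^sup>2 * (norm (w - wo))\<^sup>2 + 4 * (nI K N)\<^sup>2 * \<delta>\<^sup>2 * \<xi>\<^sup>2
        + 2 * nI K N * (real K * Wc K N B * avgsig))"
  proof (intro mult_left_mono)
    have "2 * nI K N * SG \<le> 2 * nI K N * (real K * Wc K N B * avgsig)"
      using SG_bound nI_nonneg by (intro mult_left_mono) auto
    thus "(Gam w)\<^sup>2 \<le> 4 * (nI K N)\<^sup>2 * \<delta>\<^sup>2 * (norm (w - wo))\<^sup>2 + 4 * (nI K N)\<^sup>2 * \<delta>\<^sup>2 * \<xi>\<^sup>2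
        + 2 * nI K N * (real K * Wc K N B * avgsig)"
      using Gam_sq[of w] by linarith
  qed auto
  also have "\<dots> = (\<mu>\<^sup>2 * \<beta>\<^sup>2 * (4 * (nI K N)\<^sup>2 * \<delta>\<^sup>2)) * (norm (wo - w))\<^sup>2
       + (\<mu>\<^sup>2 * \<beta>\<^sup>2 * (4 * (nI K N)\<^sup>2 * \<delta>\<^sup>2) * \<xi>\<^sup>2
       + \<mu>\<^sup>2 * \<beta>\<^sup>2 * (2 * nI K N * real K * Wc K N B) * avgsig)"
    by (simp add: norm_minus_commute algebra_simps)
  finally show ?thesis unfolding \<beta>_def .
qed

lemma part1:
  assumes mu: "0 < \<mu>" "\<mu> \<le> mu01 K p N E B pn \<delta>"
  shows "measure_pmf.expectation (noise_pmf \<mu> K L p N E B pn G asel bsel w0 j) (\<lambda>q. (norm q)\<^sup>2)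
     \<le> C1c * \<mu> * measure_pmf.expectation (iterates \<mu> K L p N E B pn G asel bsel w0 j) (\<lambda>w. (norm (wo - w))\<^sup>2)
       + C1c * \<mu> * \<xi>\<^sup>2 + C3c * \<mu>\<^sup>2 * avgsig"
proof -
  define M where "M = iterates \<mu> K L p N E B pn G asel bsel w0 j"
  define a where "a = \<mu>\<^sup>2 * (beta K p N E B pn \<delta>)\<^sup>2 * (4 * (nI K N)\<^sup>2 * \<delta>\<^sup>2)"
  define b where "b = a * \<xi>\<^sup>2 + \<mu>\<^sup>2 * (beta K p N E B pn \<delta>)\<^sup>2 * (2 * nI K N * real K * Wc K N B) * avgsig"
  have fM: "finite (set_pmf M)" unfolding M_def by (rule finite_iter)
  have "measure_pmf.expectation (noise_pmf \<mu> K L p N E B pn G asel bsel w0 j) (\<lambda>q. (norm q)\<^sup>2)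
      = measure_pmf.expectation M (\<lambda>w. measure_pmf.expectation rnd (\<lambda>\<omega>. (norm (incr_noise \<mu> K L p N E B pn G w \<omega>))\<^sup>2))"
    unfolding noise_pmf_def M_def using finite_rnd
    by (subst exp_bind_fin) (auto simp: finite_iter)
  also have "\<dots> \<le> measure_pmf.expectation M (\<lambda>w. a * (norm (wo - w))\<^sup>2 + b)"
    by (rule exp_mono_fin[OF fM]) (use noise_pointwise[OF mu] in \<open>simp add: a_def b_def\<close>)
  also have "\<dots> = a * measure_pmf.expectation M (\<lambda>w. (norm (wo - w))\<^sup>2) + b"
    by (rule exp_affine[OF fM])
  also have "\<dots> \<le> C1c * \<mu> * measure_pmf.expectation M (\<lambda>w. (norm (wo - w))\<^sup>2) + C1c * \<mu> * \<xi>\<^sup>2 + C3c * \<mu>\<^sup>2 * avgsig"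
  proof -
    have a_le: "a \<le> C1c * \<mu>"
    proof -
      have "\<mu>\<^sup>2 \<le> \<mu> * mu01 K p N E B pn \<delta>" using mu by (simp add: power2_eq_square mult_left_mono)
      hence "\<mu>\<^sup>2 * ((beta K p N E B pn \<delta>)\<^sup>2 * (4 * (nI K N)\<^sup>2 * \<delta>\<^sup>2))
          \<le> \<mu> * mu01 K p N E B pn \<delta> * ((beta K p N E B pn \<delta>)\<^sup>2 * (4 * (nI K N)\<^sup>2 * \<delta>\<^sup>2))"
        by (intro mult_right_mono) auto
      thus ?thesis unfolding a_def C1g_def by (simp add: algebra_simps)
    qed
    have E0: "measure_pmf.expectation M (\<lambda>w. (norm (wo - w))\<^sup>2) \<ge> 0" by simp
    have "a * measure_pmf.expectation M (\<lambda>w. (norm (wo - w))\<^sup>2) \<le> C1c * \<mu> * measure_pmf.expectation M (\<lambda>w. (norm (wo - w))\<^sup>2)"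
      using a_le E0 by (rule mult_right_mono)
    moreover have "a * \<xi>\<^sup>2 \<le> C1c * \<mu> * \<xi>\<^sup>2" using a_le by (intro mult_right_mono) auto
    moreover have "\<mu>\<^sup>2 * (beta K p N E B pn \<delta>)\<^sup>2 * (2 * nI K N * real K * Wc K N B) * avgsig = C3c * \<mu>\<^sup>2 * avgsig"
      unfolding C3g_def by (simp add: algebra_simps)
    ultimately show ?thesis unfolding b_def by linarith
  qed
  finally show ?thesis unfolding M_def .
qed


definition b1 :: real where "b1 = 2 ^ Es K E * \<alpha>"
definition Ac :: real where
  "Ac = beta K p N E B pn \<delta> + 2 * (beta K p N E B pn \<delta> + b1\<^sup>2) * (nI K N * \<delta>)\<^sup>2"
definition Bc :: real where
  "Bc = 2 * (beta K p N E B pn \<delta> + b1\<^sup>2) * Gam0\<^sup>2"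

lemma beta_nonneg: "beta K p N E B pn \<delta> \<ge> 0"
  unfolding beta_def by (auto intro!: mult_nonneg_nonneg sum_nonneg)

lemma Ac_nonneg: "Ac \<ge> 0" unfolding Ac_def using beta_nonneg by simp
lemma Bc_nonneg: "Bc \<ge> 0" unfolding Bc_def using beta_nonneg by simp

lemma sqnorm_add: "(norm (a + b))\<^sup>2 = (norm a)\<^sup>2 + 2 * inner a b + (norm (b::'a))\<^sup>2"
  by (simp add: power2_norm_eq_inner inner_add_left inner_add_right inner_commute)

lemma pointwise:
  assumes w: "\<omega> \<in> set_pmf rnd" and mu: "0 < \<mu>" "\<mu> \<le> mu01 K p N E B pn \<delta>"
  shows "(norm (wo - fedavg_next \<mu> K L p N E B pn G v \<omega>))\<^sup>2
     \<le> (norm (v - wo))\<^sup>2 + \<mu>\<^sup>2 * (Ac * (norm (v - wo))\<^sup>2 + Bc) - 2 * \<mu> * inner (v - wo) (sdir K L p N E B pn G v \<omega>)"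
proof -
  define d where "d = v - wo"
  define s where "s = sdir K L p N E B pn G v \<omega>"
  define q where "q = incr_noise \<mu> K L p N E B pn G v \<omega>"
  define \<Delta> where "\<Delta> = fedavg_next \<mu> K L p N E B pn G v \<omega> - v"
  define \<beta> where "\<beta> = beta K p N E B pn \<delta>"
  define \<Gamma> where "\<Gamma> = Gam v"
  have \<Gamma>0: "\<Gamma> \<ge> 0" unfolding \<Gamma>_def by (rule Gam_nonneg)
  have b0: "\<beta> \<ge> 0" unfolding \<beta>_def by (rule beta_nonneg)
  have fs: "finite (fst \<omega>)" "card (fst \<omega>) = L" using rnd_fst[OF w] by auto
  have Deq: "\<Delta> = - \<mu> *\<^sub>R (s + q)"
    unfolding \<Delta>_def s_def q_def by (rule next_decomp) (use fs L1 in auto)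
  have qb: "norm q \<le> \<mu> * \<beta> * \<Gamma>" unfolding q_def \<beta>_def \<Gamma>_def using q_bound[OF w] mu by simp
  have Db: "norm \<Delta> \<le> b1 * \<mu> * \<Gamma>" unfolding \<Delta>_def b1_def \<Gamma>_def using step_bound[OF w] mu by (simp add: mult_ac)
  have eq1: "(norm (wo - fedavg_next \<mu> K L p N E B pn G v \<omega>))\<^sup>2 = (norm (d + \<Delta>))\<^sup>2"
    unfolding d_def \<Delta>_def by (simp add: norm_minus_commute)
  also have "\<dots> = (norm d)\<^sup>2 + 2 * inner d \<Delta> + (norm \<Delta>)\<^sup>2" by (rule sqnorm_add)
  also have "inner d \<Delta> = - \<mu> * inner d s - \<mu> * inner d q"
    unfolding Deq by (simp add: inner_add_right algebra_simps)
  finally have eq2: "(norm (wo - fedavg_next \<mu> K L p N E B pn G v \<omega>))\<^sup>2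
     = (norm d)\<^sup>2 - 2 * \<mu> * inner d s - 2 * \<mu> * inner d q + (norm \<Delta>)\<^sup>2" by simp
  have c1: "- (2 * \<mu> * inner d q) \<le> \<mu>\<^sup>2 * (2 * \<beta> * (norm d * \<Gamma>))"
  proof -
    have "- inner d q \<le> norm d * norm q" using Cauchy_Schwarz_ineq2[of d q] by linarith
    also have "\<dots> \<le> norm d * (\<mu> * \<beta> * \<Gamma>)" using qb by (intro mult_left_mono) auto
    finally have "- inner d q \<le> norm d * (\<mu> * \<beta> * \<Gamma>)" .
    hence "2 * \<mu> * (- inner d q) \<le> 2 * \<mu> * (norm d * (\<mu> * \<beta> * \<Gamma>))"
      using mu by (intro mult_left_mono) auto
    thus ?thesis by (simp add: power2_eq_square algebra_simps)
  qed
  have c2: "(norm \<Delta>)\<^sup>2 \<le> \<mu>\<^sup>2 * (b1\<^sup>2 * \<Gamma>\<^sup>2)"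
  proof -
    have "(norm \<Delta>)\<^sup>2 \<le> (b1 * \<mu> * \<Gamma>)\<^sup>2" using Db by (intro power_mono) auto
    thus ?thesis by (simp add: power_mult_distrib algebra_simps)
  qed
  have c3: "2 * \<beta> * (norm d * \<Gamma>) \<le> \<beta> * (norm d)\<^sup>2 + \<beta> * \<Gamma>\<^sup>2"
  proof -
    have "2 * (norm d * \<Gamma>) \<le> (norm d)\<^sup>2 + \<Gamma>\<^sup>2"
      using sum_squares_bound[of "norm d" \<Gamma>] by (simp add: algebra_simps)
    hence "\<beta> * (2 * (norm d * \<Gamma>)) \<le> \<beta> * ((norm d)\<^sup>2 + \<Gamma>\<^sup>2)" using b0 by (rule mult_left_mono)
    thus ?thesis by (simp add: algebra_simps)
  qed
  have c4: "\<Gamma>\<^sup>2 \<le> 2 * (nI K N * \<delta>)\<^sup>2 * (norm d)\<^sup>2 + 2 * Gam0\<^sup>2"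
  proof -
    have "\<Gamma>\<^sup>2 \<le> (nI K N * \<delta> * norm d + Gam0)\<^sup>2"
      using Gam_lin[of v] \<Gamma>0 unfolding \<Gamma>_def d_def by (intro power_mono) auto
    also have "\<dots> \<le> 2 * (nI K N * \<delta> * norm d)\<^sup>2 + 2 * Gam0\<^sup>2" by (rule sq_sum2)
    finally show ?thesis by (simp add: power_mult_distrib)
  qed
  have c5: "\<beta> * (norm d)\<^sup>2 + (\<beta> + b1\<^sup>2) * \<Gamma>\<^sup>2 \<le> Ac * (norm d)\<^sup>2 + Bc"
  proof -
    have bb: "\<beta> + b1\<^sup>2 \<ge> 0" using b0 by simp
    have "(\<beta> + b1\<^sup>2) * \<Gamma>\<^sup>2 \<le> (\<beta> + b1\<^sup>2) * (2 * (nI K N * \<delta>)\<^sup>2 * (norm d)\<^sup>2 + 2 * Gam0\<^sup>2)"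
      using c4 bb by (rule mult_left_mono)
    thus ?thesis unfolding Ac_def Bc_def \<beta>_def[symmetric] by (simp add: algebra_simps)
  qed
  have "- (2 * \<mu> * inner d q) + (norm \<Delta>)\<^sup>2 \<le> \<mu>\<^sup>2 * (\<beta> * (norm d)\<^sup>2 + (\<beta> + b1\<^sup>2) * \<Gamma>\<^sup>2)"
  proof -
    have "- (2 * \<mu> * inner d q) + (norm \<Delta>)\<^sup>2 \<le> \<mu>\<^sup>2 * (2 * \<beta> * (norm d * \<Gamma>)) + \<mu>\<^sup>2 * (b1\<^sup>2 * \<Gamma>\<^sup>2)"
      using c1 c2 by linarith
    also have "\<dots> = \<mu>\<^sup>2 * (2 * \<beta> * (norm d * \<Gamma>) + b1\<^sup>2 * \<Gamma>\<^sup>2)" by (simp add: algebra_simps)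
    also have "\<dots> \<le> \<mu>\<^sup>2 * (\<beta> * (norm d)\<^sup>2 + (\<beta> + b1\<^sup>2) * \<Gamma>\<^sup>2)"
      using c3 by (intro mult_left_mono) (auto simp: algebra_simps)
    finally show ?thesis .
  qed
  also have "\<dots> \<le> \<mu>\<^sup>2 * (Ac * (norm d)\<^sup>2 + Bc)" using c5 by (intro mult_left_mono) auto
  finally show ?thesis unfolding eq2 d_def s_def by linarith
qed

lemma contraction:
  assumes mu: "0 < \<mu>" "\<mu> \<le> mu01 K p N E B pn \<delta>" "\<mu> * Ac \<le> \<nu> / 2"
  shows "measure_pmf.expectation rnd (\<lambda>\<omega>. (norm (wo - fedavg_next \<mu> K L p N E B pn G v \<omega>))\<^sup>2)
     \<le> (1 - \<mu> * \<nu> / 2) * (norm (wo - v))\<^sup>2 + \<mu>\<^sup>2 * Bc"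
proof -
  define c0 where "c0 = (norm (v - wo))\<^sup>2 + \<mu>\<^sup>2 * (Ac * (norm (v - wo))\<^sup>2 + Bc)"
  have "measure_pmf.expectation rnd (\<lambda>\<omega>. (norm (wo - fedavg_next \<mu> K L p N E B pn G v \<omega>))\<^sup>2)
      \<le> measure_pmf.expectation rnd (\<lambda>\<omega>. (- 2 * \<mu>) * inner (v - wo) (sdir K L p N E B pn G v \<omega>) + c0)"
    by (rule exp_mono_fin[OF finite_rnd]) (use pointwise[OF _ mu(1,2)] in \<open>simp add: c0_def\<close>)
  also have "\<dots> = (- 2 * \<mu>) * measure_pmf.expectation rnd (\<lambda>\<omega>. inner (v - wo) (sdir K L p N E B pn G v \<omega>)) + c0"
    by (rule exp_affine[OF finite_rnd])
  also have "\<dots> \<le> (- 2 * \<mu>) * (\<nu> / 2 * (norm (v - wo))\<^sup>2) + c0"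
  proof -
    have "measure_pmf.expectation rnd (\<lambda>\<omega>. inner (v - wo) (sdir K L p N E B pn G v \<omega>)) \<ge> \<nu> / 2 * (norm (v - wo))\<^sup>2"
      unfolding E_sdir using strong_mono[of v] .
    thus ?thesis using mu by (simp add: mult_le_cancel_left)
  qed
  also have "\<dots> \<le> (1 - \<mu> * \<nu> / 2) * (norm (wo - v))\<^sup>2 + \<mu>\<^sup>2 * Bc"
  proof -
    have "\<mu> * (\<mu> * Ac) * (norm (v - wo))\<^sup>2 \<le> \<mu> * (\<nu> / 2) * (norm (v - wo))\<^sup>2"
      using mu by (intro mult_right_mono mult_left_mono) auto
    thus ?thesis unfolding c0_def by (simp add: norm_minus_commute power2_eq_square algebra_simps)
  qed
  finally show ?thesis .
qed

definition mu0' :: real where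
  "mu0' = min (mu01 K p N E B pn \<delta>) (min (\<nu> / (2 * Ac + 1)) (1 / \<nu>))"

lemma mu0'_pos: "mu0' > 0"
  unfolding mu0'_def using mu01_pos Ac_nonneg nupos by auto

lemma mu0'_props:
  assumes "0 < \<mu>" "\<mu> \<le> mu0'"
  shows "\<mu> \<le> mu01 K p N E B pn \<delta>" "\<mu> * Ac \<le> \<nu> / 2" "\<mu> * \<nu> \<le> 1"
proof -
  show "\<mu> \<le> mu01 K p N E B pn \<delta>" using assms unfolding mu0'_def by simp
  have m2: "\<mu> \<le> \<nu> / (2 * Ac + 1)" "\<mu> \<le> 1 / \<nu>" using assms unfolding mu0'_def by auto
  have "\<mu> * (2 * Ac + 1) \<le> \<nu>" using m2(1) Ac_nonneg by (simp add: field_simps)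
  thus "\<mu> * Ac \<le> \<nu> / 2" using assms by (simp add: algebra_simps)
  show "\<mu> * \<nu> \<le> 1" using m2(2) nupos by (simp add: field_simps)
qed

definition Rb :: "'a \<Rightarrow> real" where
  "Rb w0 = max ((norm (wo - w0))\<^sup>2) (2 * mu0' * Bc / \<nu>)"

lemma iter_bound:
  assumes mu: "0 < \<mu>" "\<mu> \<le> mu0'"
  shows "measure_pmf.expectation (iterates \<mu> K L p N E B pn G asel bsel w0 j) (\<lambda>w. (norm (wo - w))\<^sup>2) \<le> Rb w0"
proof (induction j)
  case 0
  then show ?case by (simp add: Rb_def)
next
  case (Suc j)
  define M where "M = iterates \<mu> K L p N E B pn G asel bsel w0 j"
  have fM: "finite (set_pmf M)" unfolding M_def by (rule finite_iter)
  note P = mu0'_props[OF mu]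
  have "measure_pmf.expectation (iterates \<mu> K L p N E B pn G asel bsel w0 (Suc j)) (\<lambda>w. (norm (wo - w))\<^sup>2)
      = measure_pmf.expectation M (\<lambda>w. measure_pmf.expectation rnd (\<lambda>\<omega>. (norm (wo - fedavg_next \<mu> K L p N E B pn G w \<omega>))\<^sup>2))"
    unfolding M_def using finite_rnd by (simp add: exp_bind_fin finite_iter)
  also have "\<dots> \<le> measure_pmf.expectation M (\<lambda>w. (1 - \<mu> * \<nu> / 2) * (norm (wo - w))\<^sup>2 + \<mu>\<^sup>2 * Bc)"
    by (rule exp_mono_fin[OF fM]) (rule contraction[OF mu(1) P(1) P(2)])
  also have "\<dots> = (1 - \<mu> * \<nu> / 2) * measure_pmf.expectation M (\<lambda>w. (norm (wo - w))\<^sup>2) + \<mu>\<^sup>2 * Bc"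
    by (rule exp_affine[OF fM])
  also have "\<dots> \<le> (1 - \<mu> * \<nu> / 2) * Rb w0 + \<mu>\<^sup>2 * Bc"
    using Suc.IH P(3) unfolding M_def by (intro add_right_mono mult_left_mono) auto
  also have "\<dots> \<le> Rb w0"
  proof -
    have "2 * mu0' * Bc / \<nu> \<le> Rb w0" unfolding Rb_def by simp
    hence "2 * mu0' * Bc \<le> \<nu> * Rb w0" using nupos by (simp add: field_simps)
    moreover have "2 * \<mu> * Bc \<le> 2 * mu0' * Bc" using mu Bc_nonneg by (intro mult_right_mono) auto
    ultimately have "2 * \<mu> * Bc \<le> \<nu> * Rb w0" by linarith
    hence "\<mu> * (2 * \<mu> * Bc) \<le> \<mu> * (\<nu> * Rb w0)" using mu by (intro mult_left_mono) auto
    thus ?thesis by (simp add: power2_eq_square algebra_simps)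
  qed
  finally show ?case .
qed

end

theorem lemma5:
  fixes K L :: nat and N E B :: "nat \<Rightarrow> nat" and p :: "nat \<Rightarrow> real"
    and pn :: "nat \<Rightarrow> nat \<Rightarrow> real" and \<delta> \<nu> :: real
  assumes "K \<ge> 1" and "1 \<le> L" and "L \<le> K"
    and "\<forall>k<K. p k > 0" and "(\<Sum>k<K. p k) = 1"
    and "\<forall>k<K. E k \<ge> 1 \<and> B k \<ge> 1 \<and> B k \<le> N k"
    and "\<forall>k<K. (\<forall>n<N k. pn k n > 0) \<and> (\<Sum>n<N k. pn k n) = 1"
    and "\<nu> > 0"
  shows
    "(\<exists>C1 C2 C3 \<mu>0. \<mu>0 > 0 \<and>
       (\<forall>(Q :: nat \<Rightarrow> 'a::euclidean_space \<Rightarrow> 'x \<Rightarrow> real) grad x \<xi> wo wko asel bsel w0 \<mu> j.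
          instance_assms K L p N B pn \<delta> \<nu> Q grad x \<xi> wo wko asel bsel \<longrightarrow>
          0 < \<mu> \<longrightarrow> \<mu> \<le> \<mu>0 \<longrightarrow>
          measure_pmf.expectation
              (noise_pmf \<mu> K L p N E B pn (\<lambda>k n w. grad k w (x k n)) asel bsel w0 j)
              (\<lambda>q. (norm q)\<^sup>2)
            \<le> C1 * \<mu> * measure_pmf.expectation
                  (iterates \<mu> K L p N E B pn (\<lambda>k n w. grad k w (x k n)) asel bsel w0 j)
                  (\<lambda>w. (norm (wo - w))\<^sup>2)
              + C2 * \<mu> * \<xi>\<^sup>2
              + C3 * \<mu>\<^sup>2 * ((1 / real K) *
                  (\<Sum>k<K. sigma_q2 N B pn (\<lambda>k n w. grad k w (x k n)) wko k))))
     \<and>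
     (\<forall>(Q :: nat \<Rightarrow> 'a::euclidean_space \<Rightarrow> 'x \<Rightarrow> real) grad x \<xi> wo wko asel bsel w0.
        instance_assms K L p N B pn \<delta> \<nu> Q grad x \<xi> wo wko asel bsel \<longrightarrow>
        (\<exists>C \<mu>0. \<mu>0 > 0 \<and> (\<forall>\<mu> j. 0 < \<mu> \<longrightarrow> \<mu> \<le> \<mu>0 \<longrightarrow>
           measure_pmf.expectation
              (noise_pmf \<mu> K L p N E B pn (\<lambda>k n w. grad k w (x k n)) asel bsel w0 j)
              (\<lambda>q. (norm q)\<^sup>2) \<le> C * \<mu>)))"
proof -
  define C1 where "C1 = C1g K p N E B pn \<delta>"
  define C3 where "C3 = C3g K p N E B pn \<delta>"
  define m0 where "m0 = mu01 K p N E B pn \<delta>"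
  have P1: "\<forall>(Q :: nat \<Rightarrow> 'a::euclidean_space \<Rightarrow> 'x \<Rightarrow> real) grad x \<xi> wo wko asel bsel w0 \<mu> j.
          instance_assms K L p N B pn \<delta> \<nu> Q grad x \<xi> wo wko asel bsel \<longrightarrow>
          0 < \<mu> \<longrightarrow> \<mu> \<le> m0 \<longrightarrow>
          measure_pmf.expectation
              (noise_pmf \<mu> K L p N E B pn (\<lambda>k n w. grad k w (x k n)) asel bsel w0 j)
              (\<lambda>q. (norm q)\<^sup>2)
            \<le> C1 * \<mu> * measure_pmf.expectation
                  (iterates \<mu> K L p N E B pn (\<lambda>k n w. grad k w (x k n)) asel bsel w0 j)
                  (\<lambda>w. (norm (wo - w))\<^sup>2)
              + C1 * \<mu> * \<xi>\<^sup>2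
              + C3 * \<mu>\<^sup>2 * ((1 / real K) *
                  (\<Sum>k<K. sigma_q2 N B pn (\<lambda>k n w. grad k w (x k n)) wko k))"
  proof (intro allI impI)
    fix Q :: "nat \<Rightarrow> 'a::euclidean_space \<Rightarrow> 'x \<Rightarrow> real" and grad x \<xi> wo wko asel bsel w0 \<mu> j
    assume IA: "instance_assms K L p N B pn \<delta> \<nu> Q grad x \<xi> wo wko asel bsel"
      and mu: "0 < \<mu>" "\<mu> \<le> m0"
    interpret inst K L N E B p pn \<delta> \<nu> Q grad x \<xi> wo wko asel bsel
      by (rule inst.intro) (use assms IA in simp_all)
    show "measure_pmf.expectation
              (noise_pmf \<mu> K L p N E B pn (\<lambda>k n w. grad k w (x k n)) asel bsel w0 j)
              (\<lambda>q. (norm q)\<^sup>2)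
            \<le> C1 * \<mu> * measure_pmf.expectation
                  (iterates \<mu> K L p N E B pn (\<lambda>k n w. grad k w (x k n)) asel bsel w0 j)
                  (\<lambda>w. (norm (wo - w))\<^sup>2)
              + C1 * \<mu> * \<xi>\<^sup>2
              + C3 * \<mu>\<^sup>2 * ((1 / real K) *
                  (\<Sum>k<K. sigma_q2 N B pn (\<lambda>k n w. grad k w (x k n)) wko k))"
      using part1[OF mu(1), of w0 j] mu unfolding C1_def C3_def m0_def by simp
  qed
  have P2: "\<forall>(Q :: nat \<Rightarrow> 'a::euclidean_space \<Rightarrow> 'x \<Rightarrow> real) grad x \<xi> wo wko asel bsel w0.
        instance_assms K L p N B pn \<delta> \<nu> Q grad x \<xi> wo wko asel bsel \<longrightarrow>
        (\<exists>C \<mu>0. \<mu>0 > 0 \<and> (\<forall>\<mu> j. 0 < \<mu> \<longrightarrow> \<mu> \<le> \<mu>0 \<longrightarrow>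
           measure_pmf.expectation
              (noise_pmf \<mu> K L p N E B pn (\<lambda>k n w. grad k w (x k n)) asel bsel w0 j)
              (\<lambda>q. (norm q)\<^sup>2) \<le> C * \<mu>))"
  proof (intro allI impI)
    fix Q :: "nat \<Rightarrow> 'a::euclidean_space \<Rightarrow> 'x \<Rightarrow> real" and grad x \<xi> wo wko asel bsel w0
    assume IA: "instance_assms K L p N B pn \<delta> \<nu> Q grad x \<xi> wo wko asel bsel"
    interpret inst K L N E B p pn \<delta> \<nu> Q grad x \<xi> wo wko asel bsel
      by (rule inst.intro) (use assms IA in simp_all)
    define C where "C = C1 * Rb w0 + C1 * \<xi>\<^sup>2 + C3 * mu0' * avgsig"
    show "\<exists>C \<mu>0. \<mu>0 > 0 \<and> (\<forall>\<mu> j. 0 < \<mu> \<longrightarrow> \<mu> \<le> \<mu>0 \<longrightarrow>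
           measure_pmf.expectation
              (noise_pmf \<mu> K L p N E B pn (\<lambda>k n w. grad k w (x k n)) asel bsel w0 j)
              (\<lambda>q. (norm q)\<^sup>2) \<le> C * \<mu>)"
    proof (rule exI[of _ C], rule exI[of _ mu0'], intro conjI allI impI)
      show "mu0' > 0" by (rule mu0'_pos)
      fix \<mu> j assume mu: "0 < \<mu>" "\<mu> \<le> mu0'"
      have m1: "\<mu> \<le> m0" using mu0'_props[OF mu] unfolding m0_def by simp
      have C10: "C1 \<ge> 0" unfolding C1_def by (rule C1g_nonneg)
      have C30: "C3 \<ge> 0" unfolding C3_def by (rule C3g_nonneg)
      have "measure_pmf.expectation
              (noise_pmf \<mu> K L p N E B pn (\<lambda>k n w. grad k w (x k n)) asel bsel w0 j)
              (\<lambda>q. (norm q)\<^sup>2)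
          \<le> C1 * \<mu> * measure_pmf.expectation
                  (iterates \<mu> K L p N E B pn (\<lambda>k n w. grad k w (x k n)) asel bsel w0 j)
                  (\<lambda>w. (norm (wo - w))\<^sup>2)
              + C1 * \<mu> * \<xi>\<^sup>2 + C3 * \<mu>\<^sup>2 * avgsig"
        using P1 IA mu(1) m1 by blast
      also have "\<dots> \<le> C1 * \<mu> * Rb w0 + C1 * \<mu> * \<xi>\<^sup>2 + C3 * (\<mu> * mu0') * avgsig"
      proof -
        have "C1 * \<mu> * measure_pmf.expectation
                  (iterates \<mu> K L p N E B pn (\<lambda>k n w. grad k w (x k n)) asel bsel w0 j)
                  (\<lambda>w. (norm (wo - w))\<^sup>2) \<le> C1 * \<mu> * Rb w0"
          using iter_bound[OF mu, of w0 j] C10 mu by (intro mult_left_mono) auto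
        moreover have "C3 * \<mu>\<^sup>2 * avgsig \<le> C3 * (\<mu> * mu0') * avgsig"
          using C30 avgsig_nonneg mu by (intro mult_right_mono mult_left_mono) (auto simp: power2_eq_square)
        ultimately show ?thesis by linarith
      qed
      also have "\<dots> = C * \<mu>" unfolding C_def by (simp add: algebra_simps)
      finally show "measure_pmf.expectation
              (noise_pmf \<mu> K L p N E B pn (\<lambda>k n w. grad k w (x k n)) asel bsel w0 j)
              (\<lambda>q. (norm q)\<^sup>2) \<le> C * \<mu>" .
    qed
  qed
  have m0p: "m0 > 0" unfolding m0_def by (rule mu01_pos)
  show ?thesis
    using P1 P2 m0p by blast
qed

end
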